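(* Let $M\ge 1$, let $T>0$, and let $k_B>0$ be Boltzmann's constant. For the cyclically closed $2\times2\times M$ lattice model described in the context, with arbitrary real couplings $(J_\alpha)_{\alpha\in\Phi}$, let $Z_{M}(T)=\sum_{\sigma}\exp(-\mathcal H(\sigma)/(k_BT))$, where the sum runs over all $\sigma\in\{-1,1\}^{4M}$. Let $\lambda_{\max}(T)$ be the largest real root of the fourth-degree characteristic equation $\det(\lambda I-\tau)=0$ of the $4\times4$ matrix $\tau=\tau(T)$ defined in the context. Then, in the thermodynamic limit, the free energy per site $f(T)=-k_BT\lim_{M\to\infty}\frac{1}{4M}\ln Z_M(T)$ satisfies $$f(T)=-\frac{k_BT}{4}\ln\lambda_{\max}(T),$$ the internal energy per site $u(T)=-T^2\frac{\partial}{\partial T}\big[f(T)/T\big]$ equals $$u(T)=k_BT^2\frac{\partial}{\partial T}\Big[\tfrac14\ln\lambda_{\max}(T)\Big],$$ and the heat capacity per site $C(T)=\frac{\partial}{\partial T}u(T)$ equals $$C(T)=2k_BT\frac{\partial}{\partial T}\Big[\tfrac14\ln\lambda_{\max}(T)\Big]+k_BT^2\frac{\partial^2}{\partial T^2}\Big[\tfrac14\ln\lambda_{\max}(T)\Big].$$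
   Context: Lattice: sites $t_i^m$, $i\in\{0,1,2,3\}$, $m\in\{0,\dots,M-1\}$, with cyclic closure $t_i^M\equiv t_i^0$ (so $N=4M$ sites); each site carries a spin $\sigma_{t_i^m}=\sigma_i^m\in\{-1,1\}$. For a set $\Omega$ of sites, $\sigma_\Omega=\prod_{t\in\Omega}\sigma_t$. For fixed $m$ write $a_i=t_i^m$, $b_i=t_i^{m+1}$, and let $C_m=\{a_0,a_1,a_2,a_3,b_0,b_1,b_2,b_3\}$ (a unit cube). Let $\rho$ be the rotation of $C_m$ given by $\rho(a_i)=a_{i+1 \bmod 4}$, $\rho(b_i)=b_{i+1\bmod 4}$. Generating supports $\Phi=\Phi_2\cup\Phi_4\cup\Phi_6\cup\Phi_8$ (all subsets of $C_m$): $\Phi_2=\{\{a_0,a_1\},\{a_0,a_2\},\{b_0,b_1\},\{b_0,b_2\},\{a_0,b_0\},\{a_0,b_1\},\{a_0,b_2\},\{a_0,b_3\}\}$; $\Phi_4$ consists of the 22 sets $\{a_0,b_0,b_1,b_2\}$, $\{a_0,b_1,b_2,b_3\}$, $\{a_0,b_2,b_3,b_0\}$, $\{a_0,b_3,b_0,b_1\}$, $\{a_0,a_1,b_0,b_1\}$, $\{a_0,a_1,b_1,b_2\}$, $\{a_0,a_1,b_2,b_3\}$, $\{a_0,a_1,b_3,b_0\}$, $\{a_0,a_1,b_0,b_2\}$, $\{a_0,a_1,b_1,b_3\}$, $\{a_0,a_2,b_0,b_1\}$, $\{a_0,a_2,b_1,b_2\}$, $\{a_0,a_2,b_2,b_3\}$,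 $\{a_0,a_2,b_3,b_0\}$, $\{a_0,a_2,b_0,b_2\}$, $\{a_0,a_2,b_1,b_3\}$, $\{a_0,a_1,a_2,b_0\}$, $\{a_0,a_1,a_2,b_1\}$, $\{a_0,a_1,a_2,b_2\}$, $\{a_0,a_1,a_2,b_3\}$, $\{a_0,a_1,a_2,a_3\}$, $\{b_0,b_1,b_2,b_3\}$; $\Phi_6=\{C_m\setminus\beta:\beta\in\Phi_2\}$; $\Phi_8=\{C_m\}$. Each $\alpha\in\Phi$ carries a real coupling $J_\alpha$, the same for all $m$. The cube Hamiltonian is $\mathcal H^m=-\sum_{\alpha\in\Phi}J_\alpha\sum_{r=0}^{3}\sigma_{\rho^r(\alpha)}$ and the total Hamiltonian is $\mathcal H=\sum_{m=0}^{M-1}\mathcal H^m$. Transfer matrix: index a layer state $(s_0,s_1,s_2,s_3)\in\{-1,1\}^4$ by $k=1+\sum_{i=0}^3 2^i(1-s_i)/2\in\{1,\dots,16\}$. The $16\times16$ matrix $\theta$ has entries $\theta_{k,l}=\exp(-\mathcal H^m/(k_BT))$, where $\mathcal H^m$ is evaluated with $(\sigma_0^m,\dots,\sigma_3^m)$ the state of index $k$ and $(\sigma_0^{m+1},\dots,\sigma_3^{m+1})$ the state of index $l$ (this does not depend on $m$). Let $(r_1,r_2,r_3,r_4)=(1,2,4,6)$ and $G_1=\{1,16\}$, $G_2=\{2,3,5,8,9,12,14,15\}$, $G_3=\{4,7,10,13\}$, $G_4=\{6,11\}$. The $4\times4$ matrix $\tau$ has entries $\tau_{i,j}=\sum_{l\in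 G_j}\theta_{r_i,l}$. *)

theory Defs
  imports Complex_Main "HOL-Analysis.Derivative" "HOL-Library.FuncSet" "Jordan_Normal_Form.Determinant"
begin

text \<open>Positions inside a unit cube C_m: a pair (l, i) with layer offset l (0 for a_i, 1 for b_i)
  and in-layer index i in {0,1,2,3}.\<close>

type_synonym pos = "nat \<times> nat"

definition a :: "nat \<Rightarrow> pos" where "a i = (0, i)"
definition b :: "nat \<Rightarrow> pos" where "b i = (1, i)"

definition rot :: "pos \<Rightarrow> pos" where "rot p = (fst p, (snd p + 1) mod 4)"

definition Cube :: "pos set" where
  "Cube = {a 0, a 1, a 2, a 3, b 0, b 1, b 2, b 3}"

definition Phi2 :: "pos set set" where
  "Phi2 = {{a 0, a 1}, {a 0, a 2}, {b 0, b 1}, {b 0, b 2},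
           {a 0, b 0}, {a 0, b 1}, {a 0, b 2}, {a 0, b 3}}"

definition Phi4 :: "pos set set" where
  "Phi4 = {{a 0, b 0, b 1, b 2}, {a 0, b 1, b 2, b 3}, {a 0, b 2, b 3, b 0}, {a 0, b 3, b 0, b 1},
           {a 0, a 1, b 0, b 1}, {a 0, a 1, b 1, b 2}, {a 0, a 1, b 2, b 3}, {a 0, a 1, b 3, b 0},
           {a 0, a 1, b 0, b 2}, {a 0, a 1, b 1, b 3},
           {a 0, a 2, b 0, b 1}, {a 0, a 2, b 1, b 2}, {a 0, a 2, b 2, b 3}, {a 0, a 2, b 3, b 0},
           {a 0, a 2, b 0, b 2}, {a 0, a 2, b 1, b 3},
           {a 0, a 1, a 2, b 0}, {a 0, a 1, a 2, b 1}, {a 0, a 1, a 2, b 2}, {a 0, a 1, a 2, b 3},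
           {a 0, a 1, a 2, a 3}, {b 0, b 1, b 2, b 3}}"

definition Phi6 :: "pos set set" where "Phi6 = (\<lambda>\<beta>. Cube - \<beta>) ` Phi2"

definition Phi8 :: "pos set set" where "Phi8 = {Cube}"

definition Phi :: "pos set set" where "Phi = Phi2 \<union> Phi4 \<union> Phi6 \<union> Phi8"

definition cube_energy :: "(pos set \<Rightarrow> real) \<Rightarrow> (nat \<Rightarrow> real) \<Rightarrow> (nat \<Rightarrow> real) \<Rightarrow> real" where
  "cube_energy J s s' =
     - (\<Sum>\<alpha>\<in>Phi. J \<alpha> * (\<Sum>r<4. \<Prod>p\<in>(rot ^^ r) ` \<alpha>. (if fst p = 0 then s (snd p) else s' (snd p))))"

text \<open>Spin configurations of the 2x2xM lattice: sigma (m, i) = sigma_i^m, m < M, i < 4.\<close>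

definition configs :: "nat \<Rightarrow> (nat \<times> nat \<Rightarrow> real) set" where
  "configs M = ({0..<M} \<times> {0..<4}) \<rightarrow>\<^sub>E {-1, 1}"

definition total_energy :: "(pos set \<Rightarrow> real) \<Rightarrow> nat \<Rightarrow> (nat \<times> nat \<Rightarrow> real) \<Rightarrow> real" where
  "total_energy J M \<sigma> =
     (\<Sum>m<M. cube_energy J (\<lambda>i. \<sigma> (m, i)) (\<lambda>i. \<sigma> ((m + 1) mod M, i)))"

definition partition_fn :: "(pos set \<Rightarrow> real) \<Rightarrow> real \<Rightarrow> nat \<Rightarrow> real \<Rightarrow> real" where
  "partition_fn J kB M T = (\<Sum>\<sigma>\<in>configs M. exp (- total_energy J M \<sigma> / (kB * T)))"

definition state :: "nat \<Rightarrow> nat \<Rightarrow> real" where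
  "state k i = 1 - 2 * real (((k - 1) div 2 ^ i) mod 2)"

definition theta :: "(pos set \<Rightarrow> real) \<Rightarrow> real \<Rightarrow> real \<Rightarrow> nat \<Rightarrow> nat \<Rightarrow> real" where
  "theta J kB T k l = exp (- cube_energy J (state k) (state l) / (kB * T))"

definition rr :: "nat \<Rightarrow> nat" where
  "rr i = (if i = 1 then 1 else if i = 2 then 2 else if i = 3 then 4 else 6)"

definition GG :: "nat \<Rightarrow> nat set" where
  "GG j = (if j = 1 then {1, 16} else if j = 2 then {2, 3, 5, 8, 9, 12, 14, 15}
           else if j = 3 then {4, 7, 10, 13} else {6, 11})"

text \<open>The 4x4 matrix tau (Jordan_Normal_Form matrices are 0-indexed, so entry (i,j) here is
  tau_{i+1,j+1} of the paper).\<close>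

definition tau :: "(pos set \<Rightarrow> real) \<Rightarrow> real \<Rightarrow> real \<Rightarrow> real mat" where
  "tau J kB T = mat 4 4 (\<lambda>(i, j). \<Sum>l\<in>GG (j + 1). theta J kB T (rr (i + 1)) l)"

definition lambda_max :: "(pos set \<Rightarrow> real) \<Rightarrow> real \<Rightarrow> real \<Rightarrow> real" where
  "lambda_max J kB T = Max {x::real. det (smult_mat x (one_mat 4) - tau J kB T) = 0}"

definition free_energy :: "(pos set \<Rightarrow> real) \<Rightarrow> real \<Rightarrow> real \<Rightarrow> real" where
  "free_energy J kB T = - kB * T * lim (\<lambda>M. ln (partition_fn J kB M T) / (4 * real M))"

definition internal_energy :: "(pos set \<Rightarrow> real) \<Rightarrow> real \<Rightarrow> real \<Rightarrow> real" where
  "internal_energy J kB T = - T\<^sup>2 * deriv (\<lambda>t. free_energy J kB t / t) T"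

definition heat_capacity :: "(pos set \<Rightarrow> real) \<Rightarrow> real \<Rightarrow> real \<Rightarrow> real" where
  "heat_capacity J kB T = deriv (internal_energy J kB) T"

end

theory Submission
  imports Defs "HOL-Analysis.Analysis" "Jordan_Normal_Form.Char_Poly"
begin
lemma Cube_card: "card Cube = 8" by (simp add: Cube_def a_def b_def)
lemma Cube_fin: "finite Cube" by (simp add: Cube_def)
lemma Phi2_props: "\<beta> \<in> Phi2 \<Longrightarrow> \<beta> \<subseteq> Cube \<and> card \<beta> = 2"
  by (auto simp: Phi2_def Cube_def a_def b_def)
lemma Phi4_props: "\<beta> \<in> Phi4 \<Longrightarrow> \<beta> \<subseteq> Cube \<and> card \<beta> = 4"
  unfolding Phi4_def Cube_def a_def b_def by (elim insertE; simp)
lemma Phi_props: "\<alpha> \<in> Phi \<Longrightarrow> \<alpha> \<subseteq> Cube \<and> even (card \<alpha>)"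
proof -
  assume "\<alpha> \<in> Phi"
  then consider "\<alpha> \<in> Phi2" | "\<alpha> \<in> Phi4" | "\<alpha> \<in> Phi6" | "\<alpha> = Cube" unfolding Phi_def Phi8_def by blast
  then show ?thesis
  proof cases
    case 3 then obtain \<beta> where b: "\<beta> \<in> Phi2" "\<alpha> = Cube - \<beta>" unfolding Phi6_def by blast
    with Phi2_props[of \<beta>] have "finite \<beta>" using finite_subset Cube_fin by blast
    with b Phi2_props[of \<beta>] show ?thesis by (auto simp: card_Diff_subset Cube_card)
  qed (use Phi2_props Phi4_props Cube_card in auto)
qed
lemma Cube_snd: "p \<in> Cube \<Longrightarrow> snd p < 4" by (auto simp: Cube_def a_def b_def)

lemma mod4_inj: "(x::nat) < 4 \<Longrightarrow> y < 4 \<Longrightarrow> (x + r) mod 4 = (y + r) mod 4 \<Longrightarrow> x = y"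
proof -
  assume a: "x < 4" "y < 4" "(x + r) mod 4 = (y + r) mod 4"
  have "(x + r) mod 4 = (x + r mod 4) mod 4" "(y + r) mod 4 = (y + r mod 4) mod 4" by (simp_all add: mod_add_right_eq)
  moreover have "r mod 4 \<in> {0,1,2,3}" "x \<in> {0,1,2,3}" "y \<in> {0,1,2,3}" using a by auto
  ultimately show ?thesis using a by auto
qed

lemma mod4_suc: "Suc (x::nat) mod 4 = Suc y mod 4 \<Longrightarrow> x mod 4 = y mod 4"
  using mod4_inj[of "x mod 4" "y mod 4" 1] by (simp add: mod_Suc_eq)

lemma rot_pow: "snd p < 4 \<Longrightarrow> (rot ^^ r) p = (fst p, (snd p + r) mod 4)"
  by (induction r) (auto simp: rot_def mod_simps)

lemma rot_img_snd: "\<alpha> \<in> Phi \<Longrightarrow> q \<in> (rot ^^ r) ` \<alpha> \<Longrightarrow> snd q < 4"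
proof -
  assume a: "\<alpha> \<in> Phi" "q \<in> (rot ^^ r) ` \<alpha>"
  then obtain p where p: "p \<in> \<alpha>" "q = (rot ^^ r) p" by blast
  then have "p \<in> Cube" using Phi_props[OF a(1)] by blast
  then have "snd p < 4" by (rule Cube_snd)
  then show ?thesis using p rot_pow[of p r] by simp
qed

definition sg :: "(nat \<Rightarrow> real) \<Rightarrow> (nat \<Rightarrow> real) \<Rightarrow> pos \<Rightarrow> real" where
  "sg s s' p = (if fst p = 0 then s (snd p) else s' (snd p))"

lemma cube_energy_sg: "cube_energy J s s' =
   - (\<Sum>\<alpha>\<in>Phi. J \<alpha> * (\<Sum>r<4. \<Prod>p\<in>(rot ^^ r) ` \<alpha>. sg s s' p))"
  unfolding cube_energy_def sg_def ..

lemma cube_energy_cong: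
  assumes "\<And>i. i < 4 \<Longrightarrow> s i = t i" "\<And>i. i < 4 \<Longrightarrow> s' i = t' i"
  shows "cube_energy J s s' = cube_energy J t t'"
  unfolding cube_energy_sg
  by (intro arg_cong[where f=uminus] sum.cong refl arg_cong2[where f="(*)"] prod.cong)
     (auto simp: sg_def assms dest!: rot_img_snd)

lemma cube_energy_rot:
  "cube_energy J (\<lambda>i. s ((i+1) mod 4)) (\<lambda>i. s' ((i+1) mod 4)) = cube_energy J s s'"
proof -
  have key: "(\<Sum>r<4. \<Prod>p\<in>(rot ^^ r) ` \<alpha>. sg (\<lambda>i. s ((i+1) mod 4)) (\<lambda>i. s' ((i+1) mod 4)) p)
      = (\<Sum>r<4. \<Prod>p\<in>(rot ^^ r) ` \<alpha>. sg s s' p)" if "\<alpha> \<in> Phi" for \<alpha>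
  proof -
    have sub: "\<alpha> \<subseteq> Cube" using Phi_props[OF that] by blast
    have inj: "inj_on rot ((rot ^^ r) ` \<alpha>)" for r
    proof (rule inj_onI)
      fix p q assume pq: "p \<in> (rot ^^ r) ` \<alpha>" "q \<in> (rot ^^ r) ` \<alpha>" "rot p = rot q"
      have "snd p < 4" "snd q < 4" using rot_img_snd[OF that] pq by auto
      moreover have "(snd p + 1) mod 4 = (snd q + 1) mod 4" "fst p = fst q" using pq(3) by (auto simp: rot_def)
      ultimately show "p = q" using mod4_inj[of "snd p" "snd q" 1] by (simp add: prod_eq_iff)
    qed
    have im: "rot ` (rot ^^ r) ` \<alpha> = (rot ^^ Suc r) ` \<alpha>" for r
      by (simp add: image_image)
    have "(\<Prod>p\<in>(rot ^^ r) ` \<alpha>. sg (\<lambda>i. s ((i+1) mod 4)) (\<lambda>i. s' ((i+1) mod 4)) p)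
       = (\<Prod>p\<in>(rot ^^ Suc r) ` \<alpha>. sg s s' p)" for r
    proof -
      have "(\<Prod>p\<in>(rot ^^ r) ` \<alpha>. sg (\<lambda>i. s ((i+1) mod 4)) (\<lambda>i. s' ((i+1) mod 4)) p)
          = (\<Prod>p\<in>(rot ^^ r) ` \<alpha>. sg s s' (rot p))"
        by (intro prod.cong refl) (simp add: sg_def rot_def)
      also have "\<dots> = (\<Prod>p\<in>rot ` (rot ^^ r) ` \<alpha>. sg s s' p)"
        by (rule prod.reindex[OF inj, symmetric, unfolded comp_def])
      finally show ?thesis by (simp only: im)
    qed
    then have "?thesis = ((\<Sum>r<4. \<Prod>p\<in>(rot ^^ Suc r) ` \<alpha>. sg s s' p) = (\<Sum>r<4. \<Prod>p\<in>(rot ^^ r) ` \<alpha>. sg s s' p))"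
      by (simp only:)
    moreover have "(rot ^^ 4) ` \<alpha> = \<alpha>"
    proof -
      have "(rot ^^ 4) p = p" if "p \<in> \<alpha>" for p proof -
        have "p \<in> Cube" using sub that by blast
        then show ?thesis using Cube_snd[of p] rot_pow[of p 4] by (simp add: prod_eq_iff)
      qed
      then show ?thesis by (metis image_cong image_ident)
    qed
    define F where "F r = (\<Prod>p\<in>(rot ^^ r) ` \<alpha>. sg s s' p)" for r
    have F4: "F 4 = F 0" unfolding F_def using \<open>(rot ^^ 4) ` \<alpha> = \<alpha>\<close> by simp
    have "(\<Sum>r<4. F (Suc r)) + F 0 = (\<Sum>r<4. F r) + F 4"
      using sum.lessThan_Suc_shift[of F 4] sum.lessThan_Suc[of F 4] by simp
    then have "(\<Sum>r<4. F (Suc r)) = (\<Sum>r<4. F r)" using F4 by simp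
    ultimately show ?thesis unfolding F_def by simp
  qed
  show ?thesis unfolding cube_energy_sg
    by (rule arg_cong[where f=uminus], rule sum.cong[OF refl], rule arg_cong2[where f="(*)"], rule refl, erule key)
qed

lemma prod_neg: "(\<Prod>p\<in>A. - (f p :: real)) = (-1) ^ card A * (\<Prod>p\<in>A. f p)"
proof -
  have "(\<Prod>p\<in>A. - f p) = (\<Prod>p\<in>A. (-1) * f p)" by simp
  also have "\<dots> = (-1) ^ card A * (\<Prod>p\<in>A. f p)" by (simp only: prod.distrib prod_constant)
  finally show ?thesis .
qed

lemma cube_energy_flip:
  "cube_energy J (\<lambda>i. - s i) (\<lambda>i. - s' i) = cube_energy J s s'"
proof -
  have key: "(\<Prod>p\<in>(rot ^^ r) ` \<alpha>. sg (\<lambda>i. - s i) (\<lambda>i. - s' i) p) = (\<Prod>p\<in>(rot ^^ r) ` \<alpha>. sg s s' p)"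
    if "\<alpha> \<in> Phi" for \<alpha> r
  proof -
    have inj: "inj_on (rot ^^ r) \<alpha>"
    proof (rule inj_onI)
      fix p q assume pq: "p \<in> \<alpha>" "q \<in> \<alpha>" "(rot ^^ r) p = (rot ^^ r) q"
      have "p \<in> Cube" "q \<in> Cube" using Phi_props[OF that] pq by auto
      then have "snd p < 4" "snd q < 4" by (auto intro: Cube_snd)
      then show "p = q" using pq(3) mod4_inj[of "snd p" "snd q" r] by (simp add: rot_pow prod_eq_iff)
    qed
    have c: "even (card ((rot ^^ r) ` \<alpha>))" using Phi_props[OF that] card_image[OF inj] by simp
    have "(\<Prod>p\<in>(rot ^^ r) ` \<alpha>. sg (\<lambda>i. - s i) (\<lambda>i. - s' i) p) = (\<Prod>p\<in>(rot ^^ r) ` \<alpha>. - sg s s' p)"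
      by (intro prod.cong refl) (simp add: sg_def)
    also have "\<dots> = (\<Prod>p\<in>(rot ^^ r) ` \<alpha>. sg s s' p)" using c by (simp add: prod_neg)
    finally show ?thesis .
  qed
  show ?thesis unfolding cube_energy_sg by (intro arg_cong[where f=uminus] sum.cong refl) (simp add: key)
qed

section \<open>Symmetries of the layer states\<close>

definition Rk :: "nat \<Rightarrow> nat" where "Rk k = 1 + ((k - 1) div 2 + ((k - 1) mod 2) * 8)"
definition Fk :: "nat \<Rightarrow> nat" where "Fk k = 17 - k"

lemma k16_set: "{1..16::nat} = {1,2,3,4,5,6,7,8,9,10,11,12,13,14,15,16}"
  by (simp add: eval_nat_numeral atLeastAtMostSuc_conv insert_commute)
lemma k16_cases: "k \<in> {1..16} \<Longrightarrow> k \<in> {1,2,3,4,5,6,7,8,9,10,11,12,13,14,15,16::nat}"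
  using k16_set by blast
lemma i4_cases: "(i::nat) < 4 \<Longrightarrow> i \<in> {0,1,2,3}" by auto

lemma state_Rk: "k \<in> {1..16} \<Longrightarrow> i < 4 \<Longrightarrow> state (Rk k) i = state k ((i + 1) mod 4)"
  by (drule k16_cases, drule i4_cases) (auto simp: state_def Rk_def)

lemma state_Fk: "k \<in> {1..16} \<Longrightarrow> i < 4 \<Longrightarrow> state (Fk k) i = - state k i"
  by (drule k16_cases, drule i4_cases) (auto simp: state_def Fk_def)

lemma theta_Rk: "k \<in> {1..16} \<Longrightarrow> l \<in> {1..16} \<Longrightarrow> theta J kB T (Rk k) (Rk l) = theta J kB T k l"
proof -
  assume kl: "k \<in> {1..16}" "l \<in> {1..16}"
  have "cube_energy J (state (Rk k)) (state (Rk l))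
      = cube_energy J (\<lambda>i. state k ((i + 1) mod 4)) (\<lambda>i. state l ((i + 1) mod 4))"
    by (rule cube_energy_cong) (use kl state_Rk in auto)
  also have "\<dots> = cube_energy J (state k) (state l)" by (rule cube_energy_rot)
  finally show ?thesis unfolding theta_def by simp
qed

lemma theta_Fk: "k \<in> {1..16} \<Longrightarrow> l \<in> {1..16} \<Longrightarrow> theta J kB T (Fk k) (Fk l) = theta J kB T k l"
proof -
  assume kl: "k \<in> {1..16}" "l \<in> {1..16}"
  have "cube_energy J (state (Fk k)) (state (Fk l))
      = cube_energy J (\<lambda>i. - state k i) (\<lambda>i. - state l i)"
    by (rule cube_energy_cong) (use kl state_Fk in auto)
  also have "\<dots> = cube_energy J (state k) (state l)" by (rule cube_energy_flip)
  finally show ?thesis unfolding theta_def by simp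
qed

lemma GG_sub: "GG j \<subseteq> {1..16}" by (auto simp: GG_def)
lemma Rk_GG: "Rk ` GG j = GG j" by (auto simp: GG_def Rk_def)
lemma Fk_GG: "Fk ` GG j = GG j" by (auto simp: GG_def Fk_def)

lemma inj_Rk: "inj_on Rk {1..16}"
proof (rule inj_on_inverseI)
  fix k :: nat assume "k \<in> {1..16}"
  then show "(\<lambda>k. 1 + (((k - 1) mod 8) * 2 + (k - 1) div 8)) (Rk k) = k"
    by (drule_tac k16_cases) (auto simp: Rk_def)
qed
lemma inj_Fk: "inj_on Fk {1..16}"
  by (rule inj_onI) (auto simp: Fk_def)

definition Ssum :: "(pos set \<Rightarrow> real) \<Rightarrow> real \<Rightarrow> real \<Rightarrow> nat \<Rightarrow> nat \<Rightarrow> real" where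
  "Ssum J kB T k j = (\<Sum>l\<in>GG j. theta J kB T k l)"

lemma Ssum_sym:
  assumes k: "k \<in> {1..16}" and inj: "inj_on g {1..16}" and im: "g ` GG j = GG j"
    and th: "\<And>l. l \<in> {1..16} \<Longrightarrow> theta J kB T (g k) (g l) = theta J kB T k l"
  shows "Ssum J kB T (g k) j = Ssum J kB T k j"
proof -
  have inj': "inj_on g (GG j)" using inj GG_sub inj_on_subset by blast
  have "Ssum J kB T (g k) j = (\<Sum>l\<in>g ` GG j. theta J kB T (g k) l)" unfolding Ssum_def im ..
  also have "\<dots> = (\<Sum>l\<in>GG j. theta J kB T (g k) (g l))" by (rule sum.reindex_cong[OF inj' refl refl])
  also have "\<dots> = Ssum J kB T k j" unfolding Ssum_def by (intro sum.cong refl th) (use GG_sub in blast)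
  finally show ?thesis .
qed

lemma Ssum_Rk: "k \<in> {1..16} \<Longrightarrow> Ssum J kB T (Rk k) j = Ssum J kB T k j"
  by (rule Ssum_sym[OF _ inj_Rk Rk_GG theta_Rk])
lemma Ssum_Fk: "k \<in> {1..16} \<Longrightarrow> Ssum J kB T (Fk k) j = Ssum J kB T k j"
  by (rule Ssum_sym[OF _ inj_Fk Fk_GG theta_Fk])

definition cls :: "nat \<Rightarrow> nat" where
  "cls k = (if k \<in> {1,16} then 0 else if k \<in> {2,3,5,8,9,12,14,15} then 1 else if k \<in> {4,7,10,13} then 2 else 3)"

lemma Ssum_equit: "k \<in> {1..16} \<Longrightarrow> Ssum J kB T k j = Ssum J kB T (rr (cls k + 1)) j"
proof -
  assume k: "k \<in> {1..16}"
  let ?S = "\<lambda>k. Ssum J kB T k j"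
  have R: "?S (Rk k) = ?S k" if "k \<in> {1..16}" for k using Ssum_Rk[OF that] .
  have F: "?S (Fk k) = ?S k" if "k \<in> {1..16}" for k using Ssum_Fk[OF that] .
  have e1: "?S 16 = ?S 1" using F[of 1] by (simp add: Fk_def)
  have e9: "?S 9 = ?S 2" using R[of 2] by (simp add: Rk_def)
  have e5: "?S 5 = ?S 2" using R[of 9] e9 by (simp add: Rk_def)
  have e3: "?S 3 = ?S 2" using R[of 5] e5 by (simp add: Rk_def numeral_3_eq_3)
  have e15: "?S 15 = ?S 2" using F[of 2] by (simp add: Fk_def)
  have e8: "?S 8 = ?S 2" using F[of 9] e9 by (simp add: Fk_def)
  have e12: "?S 12 = ?S 2" using F[of 5] e5 by (simp add: Fk_def)
  have e14: "?S 14 = ?S 2" using F[of 3] e3 by (simp add: Fk_def)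
  have e10: "?S 10 = ?S 4" using R[of 4] by (simp add: Rk_def)
  have e13: "?S 13 = ?S 4" using R[of 10] e10 by (simp add: Rk_def)
  have e7: "?S 7 = ?S 4" using R[of 13] e13 by (simp add: Rk_def)
  have e11: "?S 11 = ?S 6" using R[of 6] by (simp add: Rk_def)
  from k16_cases[OF k] show ?thesis
    by (elim insertE) (simp_all only: e1 e9 e5 e3 e15 e8 e12 e14 e10 e13 e7 e11, simp_all add: cls_def rr_def)
qed

lemma cls_lt: "cls k < 4" by (simp add: cls_def)
lemma cls_GG: "l \<in> GG (j + 1) \<Longrightarrow> j < 4 \<Longrightarrow> cls l = j"
  by (drule i4_cases) (auto simp: GG_def cls_def)

lemma tau_carrier: "tau J kB T \<in> carrier_mat 4 4" by (simp add: tau_def)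
lemma tau_dim[simp]: "dim_row (tau J kB T) = 4" "dim_col (tau J kB T) = 4" by (simp_all add: tau_def)
lemma tau_index: "i < 4 \<Longrightarrow> j < 4 \<Longrightarrow> tau J kB T $$ (i, j) = Ssum J kB T (rr (i + 1)) (j + 1)"
  by (simp add: tau_def Ssum_def)

lemma sum16_split: "(\<Sum>l\<in>{1..16::nat}. f l) = (\<Sum>j<4. \<Sum>l\<in>GG (j + 1). f l)"
proof -
  have "{1..16::nat} = GG 1 \<union> GG 2 \<union> GG 3 \<union> GG 4" unfolding k16_set by (auto simp: GG_def)
  then have "(\<Sum>l\<in>{1..16::nat}. f l) = sum f (GG 1) + sum f (GG 2) + sum f (GG 3) + sum f (GG 4)"
    by (simp add: sum.union_disjoint GG_def add_ac)
  then show ?thesis by (simp add: eval_nat_numeral)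
qed

lemma lift_eigen:
  assumes u: "u \<in> carrier_vec 4" and ev: "tau J kB T *\<^sub>v u = \<mu> \<cdot>\<^sub>v u" and k: "k \<in> {1..16}"
  shows "(\<Sum>l\<in>{1..16}. theta J kB T k l * u $ cls l) = \<mu> * u $ cls k"
proof -
  have "(\<Sum>l\<in>{1..16}. theta J kB T k l * u $ cls l) = (\<Sum>j<4. \<Sum>l\<in>GG (j + 1). theta J kB T k l * u $ j)"
    unfolding sum16_split by (intro sum.cong refl) (simp add: cls_GG)
  also have "\<dots> = (\<Sum>j<4. Ssum J kB T k (j + 1) * u $ j)" by (simp add: Ssum_def sum_distrib_right)
  also have "\<dots> = (\<Sum>j<4. tau J kB T $$ (cls k, j) * u $ j)"
    by (intro sum.cong refl) (simp add: tau_index cls_lt Ssum_equit[OF k])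
  also have "\<dots> = (tau J kB T *\<^sub>v u) $ cls k"
  proof -
    have d: "dim_row (tau J kB T) = 4" "dim_col (tau J kB T) = 4" "dim_vec u = 4" using u by (auto simp: tau_def)
    show ?thesis using cls_lt[of k] by (simp add: d scalar_prod_def lessThan_atLeast0)
  qed
  also have "\<dots> = \<mu> * u $ cls k" using ev u cls_lt[of k] by simp
  finally show ?thesis .
qed

section \<open>Partition function as a sum over index sequences\<close>

definition idx :: "(nat \<Rightarrow> real) \<Rightarrow> nat" where
  "idx s = 1 + (\<Sum>i<4. 2 ^ i * (if s i = 1 then 0 else 1))"

lemma idx_cong: "(\<And>i. i < 4 \<Longrightarrow> s i = t i) \<Longrightarrow> idx s = idx t"
  unfolding idx_def by (intro arg_cong[where f="\<lambda>x. 1 + x"] sum.cong) auto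

lemma sum4: "(\<Sum>i<(4::nat). f i) = f 0 + f 1 + f 2 + (f 3 :: 'a :: comm_monoid_add)"
  by (simp add: eval_nat_numeral add_ac)

lemma idx_state: "k \<in> {1..16} \<Longrightarrow> idx (state k) = k"
  by (drule k16_cases) (auto simp: idx_def sum4 state_def)

lemma state_pm: "state k i \<in> {-1, 1}"
  unfolding state_def by (cases "((k - 1) div 2 ^ i) mod 2 = 0") (auto simp: mod2_eq_if)

lemma state_idx:
  assumes s: "\<And>i. i < 4 \<Longrightarrow> s i \<in> {-1, 1}" and i: "i < 4"
  shows "state (idx s) i = s i"
proof -
  have "s 0 \<in> {-1,1}" "s 1 \<in> {-1,1}" "s 2 \<in> {-1,1}" "s 3 \<in> {-1,1}" using s by auto
  with i4_cases[OF i] show ?thesis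
    by (auto simp: idx_def sum4 state_def)
qed

lemma idx_range: "idx s \<in> {1..16}"
proof -
  have "(\<Sum>i<4. 2 ^ i * (if s i = 1 then 0 else 1)) \<le> (\<Sum>i<4. (2::nat) ^ i)"
    by (intro sum_mono) auto
  also have "\<dots> = 15" by (simp add: sum4)
  finally show ?thesis by (simp add: idx_def)
qed

lemma partition_fn_eq:
  assumes M: "M > 0"
  shows "partition_fn J kB M T =
    (\<Sum>ks\<in>Pi\<^sub>E {0..<M} (\<lambda>_. {1..16}). \<Prod>m<M. theta J kB T (ks m) (ks ((m + 1) mod M)))"
proof -
  define jj where "jj ks = (\<lambda>(m, i). if m < M \<and> i < 4 then state (ks m) i else undefined)" for ks :: "nat \<Rightarrow> nat"
  define ii where "ii \<sigma> = (\<lambda>m. if m < M then idx (\<lambda>i. \<sigma> (m, i)) else undefined)" for \<sigma> :: "nat \<times> nat \<Rightarrow> real"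
  show ?thesis unfolding partition_fn_def
  proof (rule sum.reindex_bij_witness[symmetric, where i = ii and j = jj])
    fix ks :: "nat \<Rightarrow> nat" assume ks: "ks \<in> Pi\<^sub>E {0..<M} (\<lambda>_. {1..16})"
    show "ii (jj ks) = ks"
    proof
      fix m show "ii (jj ks) m = ks m"
      proof (cases "m < M")
        case True
        have "idx (\<lambda>i. jj ks (m, i)) = idx (state (ks m))" using True by (intro idx_cong) (simp add: jj_def)
        also have "\<dots> = ks m" using ks True by (intro idx_state) auto
        finally show ?thesis using True by (simp add: ii_def)
      next
        case False then show ?thesis using ks by (auto simp: ii_def PiE_def extensional_def)
      qed
    qed
    have pm: "\<And>k i. state k i = -1 \<or> state k i = 1" using state_pm by auto
    show "jj ks \<in> configs M" unfolding configs_def jj_def by (auto simp: PiE_def extensional_def) (meson pm)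
    have E: "cube_energy J (\<lambda>i. jj ks (m, i)) (\<lambda>i. jj ks ((m + 1) mod M, i))
        = cube_energy J (state (ks m)) (state (ks ((m + 1) mod M)))" if "m < M" for m
      using that M by (intro cube_energy_cong) (auto simp: jj_def)
    have "exp (- total_energy J M (jj ks) / (kB * T)) =
       exp (\<Sum>m<M. - cube_energy J (state (ks m)) (state (ks ((m + 1) mod M))) / (kB * T))"
    proof -
      have S: "(\<Sum>m<M. cube_energy J (\<lambda>i. jj ks (m, i)) (\<lambda>i. jj ks ((m + 1) mod M, i)))
          = (\<Sum>m<M. cube_energy J (state (ks m)) (state (ks ((m + 1) mod M))))"
        by (rule sum.cong, rule refl, rule E, simp)
      show ?thesis unfolding total_energy_def S by (simp add: sum_negf sum_divide_distrib)
    qed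
    also have "\<dots> = (\<Prod>m<M. theta J kB T (ks m) (ks ((m + 1) mod M)))"
      by (simp add: exp_sum theta_def)
    finally show "exp (- total_energy J M (jj ks) / (kB * T)) = (\<Prod>m<M. theta J kB T (ks m) (ks ((m + 1) mod M)))" .
  next
    fix \<sigma> assume \<sigma>: "\<sigma> \<in> configs M"
    then have pm: "\<And>m i. m < M \<Longrightarrow> i < 4 \<Longrightarrow> \<sigma> (m, i) \<in> {-1, 1}" and ext: "\<And>m i. \<not> (m < M \<and> i < 4) \<Longrightarrow> \<sigma> (m, i) = undefined"
      unfolding configs_def by (auto simp: PiE_def extensional_def Pi_def)
    show "ii \<sigma> \<in> Pi\<^sub>E {0..<M} (\<lambda>_. {1..16})" using idx_range by (auto simp: ii_def PiE_def extensional_def)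
    show "jj (ii \<sigma>) = \<sigma>"
    proof
      fix p :: "nat \<times> nat"
      obtain m i where p: "p = (m, i)" by force
      show "jj (ii \<sigma>) p = \<sigma> p"
        unfolding p jj_def ii_def using pm ext state_idx[of "\<lambda>i. \<sigma> (m, i)" i] by auto
    qed
  qed
qed

section \<open>Transfer-matrix bounds\<close>

lemma sum_PiE_insert:
  assumes "x \<notin> A"
  shows "sum F (Pi\<^sub>E (insert x A) T) = (\<Sum>y\<in>T x. \<Sum>f\<in>Pi\<^sub>E A T. F (f(x := y)))"
proof -
  have "sum F (Pi\<^sub>E (insert x A) T) = sum (F \<circ> (\<lambda>(y, g). g(x := y))) (T x \<times> Pi\<^sub>E A T)"
    unfolding PiE_insert_eq by (rule sum.reindex[OF inj_combinator[OF assms]])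
  also have "\<dots> = (\<Sum>y\<in>T x. \<Sum>f\<in>Pi\<^sub>E A T. F (f(x := y)))"
    by (simp add: sum.cartesian_product split_def)
  finally show ?thesis .
qed

lemma chain_sum:
  fixes g :: "nat \<Rightarrow> nat \<Rightarrow> real" and w :: "nat \<Rightarrow> real"
  assumes ev: "\<And>k. k \<in> S \<Longrightarrow> (\<Sum>l\<in>S. g k l * w l) = lam * w k"
  shows "(\<Sum>ks\<in>Pi\<^sub>E {0..<Suc n} (\<lambda>_. S). (\<Prod>m<n. g (ks m) (ks (Suc m))) * w (ks n))
     = lam ^ n * (\<Sum>k\<in>S. w k)"
proof (induction n)
  case 0
  have "{0..<Suc 0} = insert 0 {}" by auto
  then show ?case by (simp add: sum_PiE_insert)
next
  case (Suc n)
  have I: "{0..<Suc (Suc n)} = insert (Suc n) {0..<Suc n}" by auto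
  have "(\<Sum>ks\<in>Pi\<^sub>E {0..<Suc (Suc n)} (\<lambda>_. S). (\<Prod>m<Suc n. g (ks m) (ks (Suc m))) * w (ks (Suc n)))
    = (\<Sum>y\<in>S. \<Sum>f\<in>Pi\<^sub>E {0..<Suc n} (\<lambda>_. S). (\<Prod>m<n. g (f m) (f (Suc m))) * (g (f n) y * w y))"
    unfolding I
    by (subst sum_PiE_insert) (auto simp: prod.lessThan_Suc intro!: sum.cong prod.cong)
  also have "\<dots> = (\<Sum>f\<in>Pi\<^sub>E {0..<Suc n} (\<lambda>_. S). (\<Prod>m<n. g (f m) (f (Suc m))) * (\<Sum>y\<in>S. g (f n) y * w y))"
    by (simp add: sum.swap[of _ S] sum_distrib_left)
  also have "\<dots> = (\<Sum>f\<in>Pi\<^sub>E {0..<Suc n} (\<lambda>_. S). lam * ((\<Prod>m<n. g (f m) (f (Suc m))) * w (f n)))"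
    by (intro sum.cong refl) (auto simp: ev PiE_def Pi_def)
  also have "\<dots> = lam ^ Suc n * (\<Sum>k\<in>S. w k)" by (simp add: sum_distrib_left[symmetric] Suc)
  finally show ?case .
qed

lemma affine_limit: "(\<lambda>n. (c + real n * l) / (4 * real (Suc n))) \<longlonglongrightarrow> l / 4"
proof -
  have eq: "(c + real n * l) / (4 * real (Suc n)) = l / 4 + ((c - l) / 4) * inverse (real (Suc n))" for n
    by (simp add: field_simps)
  have "(\<lambda>n. l / 4 + ((c - l) / 4) * inverse (real (Suc n))) \<longlonglongrightarrow> l / 4 + ((c - l) / 4) * 0"
    by (intro tendsto_intros LIMSEQ_inverse_real_of_nat)
  then show ?thesis unfolding eq by simp
qed

lemma Z_limit:
  fixes g :: "nat \<Rightarrow> nat \<Rightarrow> real" and w :: "nat \<Rightarrow> real" and Z :: "nat \<Rightarrow> real"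
  assumes fin: "finite S" and ne: "S \<noteq> {}"
    and gpos: "\<And>a b. a \<in> S \<Longrightarrow> b \<in> S \<Longrightarrow> g a b > 0"
    and wpos: "\<And>a. a \<in> S \<Longrightarrow> w a > 0"
    and ev: "\<And>k. k \<in> S \<Longrightarrow> (\<Sum>l\<in>S. g k l * w l) = lam * w k"
    and Z: "\<And>M. M > 0 \<Longrightarrow> Z M = (\<Sum>ks\<in>Pi\<^sub>E {0..<M} (\<lambda>_. S). \<Prod>m<M. g (ks m) (ks ((m + 1) mod M)))"
  shows "(\<lambda>M. ln (Z M) / (4 * real M)) \<longlonglongrightarrow> ln lam / 4"
proof -
  obtain k0 where k0: "k0 \<in> S" using ne by blast
  have lampos: "lam > 0"
  proof -
    have "0 < (\<Sum>l\<in>S. g k0 l * w l)" using fin ne k0 gpos wpos by (intro sum_pos) auto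
    then have "0 < lam * w k0" using ev k0 by simp
    with wpos[OF k0] show ?thesis by (simp add: zero_less_mult_iff)
  qed
  define W where "W = (\<Sum>k\<in>S. w k)"
  have Wpos: "W > 0" unfolding W_def using fin ne wpos by (intro sum_pos) auto
  define K where "K = (\<Sum>a\<in>S. \<Sum>b\<in>S. g a b / w a)"
  define \<kappa> where "\<kappa> = 1 / (\<Sum>a\<in>S. \<Sum>b\<in>S. w a / g a b)"
  have Kb: "g a b \<le> K * w a" if "a \<in> S" "b \<in> S" for a b
  proof -
    have "g a b / w a \<le> (\<Sum>b\<in>S. g a b / w a)"
      using that fin gpos wpos by (intro member_le_sum) (auto intro: less_imp_le)
    also have "\<dots> \<le> K" unfolding K_def
      using that fin gpos wpos by (intro member_le_sum sum_nonneg) (auto intro: less_imp_le)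
    finally show ?thesis using wpos[OF that(1)] by (simp add: field_simps)
  qed
  have Dpos: "(\<Sum>a\<in>S. \<Sum>b\<in>S. w a / g a b) > 0"
    using fin ne gpos wpos by (intro sum_pos) auto
  have \<kappa>pos: "\<kappa> > 0" unfolding \<kappa>_def using Dpos by simp
  have \<kappa>b: "\<kappa> * w a \<le> g a b" if "a \<in> S" "b \<in> S" for a b
  proof -
    have "w a / g a b \<le> (\<Sum>b\<in>S. w a / g a b)"
      using that fin gpos wpos by (intro member_le_sum) (auto intro: less_imp_le)
    also have "\<dots> \<le> (\<Sum>a\<in>S. \<Sum>b\<in>S. w a / g a b)"
      using that fin gpos wpos by (intro member_le_sum sum_nonneg) (auto intro: less_imp_le)
    finally have "w a / g a b \<le> (\<Sum>a\<in>S. \<Sum>b\<in>S. w a / g a b)" .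
    then show ?thesis unfolding \<kappa>_def using gpos[OF that] Dpos by (simp add: field_simps)
  qed
  define C where "C n ks = (\<Prod>m<n. g (ks m) (ks (Suc m)))" for n ks
  have Cnn: "C n ks \<ge> 0" if "ks \<in> Pi\<^sub>E {0..<Suc n} (\<lambda>_. S)" for n ks
    unfolding C_def using that gpos by (intro prod_nonneg) (auto simp: PiE_def Pi_def intro: less_imp_le)
  have cyc: "(\<Prod>m<Suc n. g (ks m) (ks ((m + 1) mod Suc n))) = C n ks * g (ks n) (ks 0)" for n ks
  proof -
    have "(\<Prod>m<n. g (ks m) (ks ((m + 1) mod Suc n))) = C n ks"
      unfolding C_def by (intro prod.cong) auto
    then show ?thesis by (simp add: prod.lessThan_Suc)
  qed
  have chain: "(\<Sum>ks\<in>Pi\<^sub>E {0..<Suc n} (\<lambda>_. S). C n ks * w (ks n)) = lam ^ n * W" for n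
    unfolding C_def W_def by (rule chain_sum[OF ev])
  have ZS: "Z (Suc n) = (\<Sum>ks\<in>Pi\<^sub>E {0..<Suc n} (\<lambda>_. S). C n ks * g (ks n) (ks 0))" for n
    unfolding Z[OF zero_less_Suc] by (rule sum.cong[OF refl cyc])
  have up: "Z (Suc n) \<le> K * (lam ^ n * W)" for n
  proof -
    have "Z (Suc n) = (\<Sum>ks\<in>Pi\<^sub>E {0..<Suc n} (\<lambda>_. S). C n ks * g (ks n) (ks 0))"
      by (rule ZS)
    also have "\<dots> \<le> (\<Sum>ks\<in>Pi\<^sub>E {0..<Suc n} (\<lambda>_. S). K * (C n ks * w (ks n)))"
    proof (rule sum_mono)
      fix ks assume ks: "ks \<in> Pi\<^sub>E {0..<Suc n} (\<lambda>_. S)"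
      then have "ks n \<in> S" "ks 0 \<in> S" by (auto simp: PiE_def Pi_def)
      then have "g (ks n) (ks 0) \<le> K * w (ks n)" by (rule Kb)
      then show "C n ks * g (ks n) (ks 0) \<le> K * (C n ks * w (ks n))"
        using Cnn[OF ks] by (metis mult.left_commute mult_left_mono)
    qed
    also have "\<dots> = K * (lam ^ n * W)" by (simp add: sum_distrib_left[symmetric] chain)
    finally show ?thesis .
  qed
  have low: "\<kappa> * (lam ^ n * W) \<le> Z (Suc n)" for n
  proof -
    have "\<kappa> * (lam ^ n * W) = (\<Sum>ks\<in>Pi\<^sub>E {0..<Suc n} (\<lambda>_. S). \<kappa> * (C n ks * w (ks n)))"
      by (simp add: sum_distrib_left[symmetric] chain)
    also have "\<dots> \<le> (\<Sum>ks\<in>Pi\<^sub>E {0..<Suc n} (\<lambda>_. S). C n ks * g (ks n) (ks 0))"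
    proof (rule sum_mono)
      fix ks assume ks: "ks \<in> Pi\<^sub>E {0..<Suc n} (\<lambda>_. S)"
      then have "ks n \<in> S" "ks 0 \<in> S" by (auto simp: PiE_def Pi_def)
      then have "\<kappa> * w (ks n) \<le> g (ks n) (ks 0)" by (rule \<kappa>b)
      then show "\<kappa> * (C n ks * w (ks n)) \<le> C n ks * g (ks n) (ks 0)"
        using Cnn[OF ks] by (metis mult.left_commute mult_left_mono)
    qed
    also have "\<dots> = Z (Suc n)" by (rule ZS[symmetric])
    finally show ?thesis .
  qed
  have Kpos: "K > 0" using Kb[OF k0 k0] gpos[OF k0 k0] wpos[OF k0]
    by (smt (verit) mult_nonpos_nonneg)
  have "(\<lambda>n. ln (Z (Suc n)) / (4 * real (Suc n))) \<longlonglongrightarrow> ln lam / 4"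
  proof (rule tendsto_sandwich)
    show "(\<lambda>n. (ln (\<kappa> * W) + real n * ln lam) / (4 * real (Suc n))) \<longlonglongrightarrow> ln lam / 4"
      by (rule affine_limit)
    show "(\<lambda>n. (ln (K * W) + real n * ln lam) / (4 * real (Suc n))) \<longlonglongrightarrow> ln lam / 4"
      by (rule affine_limit)
    show "\<forall>\<^sub>F n in sequentially. (ln (\<kappa> * W) + real n * ln lam) / (4 * real (Suc n)) \<le> ln (Z (Suc n)) / (4 * real (Suc n))"
    proof (rule always_eventually, rule allI)
      fix n
      have p: "0 < \<kappa> * (lam ^ n * W)" using \<kappa>pos lampos Wpos by simp
      have "ln (\<kappa> * (lam ^ n * W)) \<le> ln (Z (Suc n))" using low[of n] p by simp
      moreover have "ln (\<kappa> * (lam ^ n * W)) = ln (\<kappa> * W) + real n * ln lam"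
        using \<kappa>pos lampos Wpos by (simp add: ln_mult ln_realpow)
      ultimately show "(ln (\<kappa> * W) + real n * ln lam) / (4 * real (Suc n)) \<le> ln (Z (Suc n)) / (4 * real (Suc n))"
        by (intro divide_right_mono) auto
    qed
    show "\<forall>\<^sub>F n in sequentially. ln (Z (Suc n)) / (4 * real (Suc n)) \<le> (ln (K * W) + real n * ln lam) / (4 * real (Suc n))"
    proof (rule always_eventually, rule allI)
      fix n
      have p: "0 < \<kappa> * (lam ^ n * W)" using \<kappa>pos lampos Wpos by simp
      have "ln (Z (Suc n)) \<le> ln (K * (lam ^ n * W))" using up[of n] low[of n] p by simp
      moreover have "ln (K * (lam ^ n * W)) = ln (K * W) + real n * ln lam"
        using Kpos lampos Wpos by (simp add: ln_mult ln_realpow)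
      ultimately show "ln (Z (Suc n)) / (4 * real (Suc n)) \<le> (ln (K * W) + real n * ln lam) / (4 * real (Suc n))"
        by (intro divide_right_mono) auto
    qed
  qed
  then show ?thesis by (rule LIMSEQ_imp_Suc)
qed

section \<open>Perron-type facts for positive matrices\<close>

lemma mv_index: "A \<in> carrier_mat n m \<Longrightarrow> v \<in> carrier_vec m \<Longrightarrow> i < n \<Longrightarrow>
    (A *\<^sub>v v) $ i = (\<Sum>j<m. A $$ (i, j) * v $ j)"
  by (auto simp: scalar_prod_def lessThan_atLeast0)

definition perron_vec :: "real mat \<Rightarrow> nat \<Rightarrow> real vec \<Rightarrow> real \<Rightarrow> bool" where
  "perron_vec A n u lam \<longleftrightarrow> u \<in> carrier_vec n \<and> (\<forall>i<n. u $ i > 0) \<and> A *\<^sub>v u = lam \<cdot>\<^sub>v u"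

lemma perron_eq:
  assumes A: "A \<in> carrier_mat n n" and P: "perron_vec A n u lam" and i: "i < n"
  shows "(\<Sum>j<n. A $$ (i, j) * u $ j) = lam * u $ i"
proof -
  have "(A *\<^sub>v u) $ i = (lam \<cdot>\<^sub>v u) $ i" using P by (simp add: perron_vec_def)
  then show ?thesis using mv_index[OF A _ i, of u] P i by (simp add: perron_vec_def)
qed

lemma max_ratio:
  fixes y z :: "nat \<Rightarrow> real"
  assumes n: "n > 0" and z: "\<And>j. j < n \<Longrightarrow> z j > 0"
  obtains c k0 where "k0 < n" "\<And>j. j < n \<Longrightarrow> y j \<le> c * z j" "y k0 = c * z k0"
proof -
  let ?R = "(\<lambda>k. y k / z k) ` {..<n}"
  have fin: "finite ?R" and ne: "?R \<noteq> {}" using n by auto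
  obtain k0 where k0: "k0 < n" "Max ?R = y k0 / z k0" using Max_in[OF fin ne] by auto
  show ?thesis
  proof
    show "k0 < n" by fact
    fix j assume j: "j < n"
    have "y j / z j \<le> Max ?R" using fin j by (intro Max_ge) auto
    then show "y j \<le> Max ?R * z j" using z[OF j] by (simp add: field_simps)
  next
    show "y k0 = Max ?R * z k0" using k0 z[OF k0(1)] by simp
  qed
qed

lemma cw_lower:
  assumes A: "A \<in> carrier_mat n n" and Anng: "\<And>i j. i < n \<Longrightarrow> j < n \<Longrightarrow> A $$ (i, j) \<ge> 0"
    and P: "perron_vec A n u lam"
    and ynn: "\<And>j. j < n \<Longrightarrow> y j \<ge> 0" and k: "k < n" "y k > 0"
    and le: "\<And>i. i < n \<Longrightarrow> \<alpha> * y i \<le> (\<Sum>j<n. A $$ (i, j) * y j)"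
  shows "\<alpha> \<le> lam"
proof -
  have n: "n > 0" using k by auto
  have upos: "\<And>j. j < n \<Longrightarrow> u $ j > 0" using P by (simp add: perron_vec_def)
  obtain c k0 where k0: "k0 < n" and yc: "\<And>j. j < n \<Longrightarrow> y j \<le> c * u $ j" and eq: "y k0 = c * u $ k0"
    using max_ratio[where z="\<lambda>j. u $ j" and y=y, OF n upos] by metis
  have cpos: "c > 0"
  proof -
    have "0 < c * u $ k" using yc[OF k(1)] k(2) by simp
    with upos[OF k(1)] show ?thesis by (simp add: zero_less_mult_iff)
  qed
  have yk0: "y k0 > 0" using eq cpos upos[OF k0] by simp
  have "\<alpha> * y k0 \<le> (\<Sum>j<n. A $$ (k0, j) * y j)" by (rule le[OF k0])
  also have "\<dots> \<le> (\<Sum>j<n. A $$ (k0, j) * (c * u $ j))"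
    by (intro sum_mono mult_left_mono yc Anng k0) auto
  also have "\<dots> = c * (\<Sum>j<n. A $$ (k0, j) * u $ j)" by (simp add: sum_distrib_left algebra_simps)
  also have "\<dots> = c * (lam * u $ k0)" using perron_eq[OF A P k0] by simp
  also have "\<dots> = lam * y k0" using eq by simp
  finally show ?thesis using yk0 by simp
qed

lemma cw_lower_strict:
  assumes A: "A \<in> carrier_mat n n" and Apos: "\<And>i j. i < n \<Longrightarrow> j < n \<Longrightarrow> A $$ (i, j) > 0"
    and P: "perron_vec A n u lam"
    and ynn: "\<And>j. j < n \<Longrightarrow> y j \<ge> 0" and k: "k < n" "y k > 0" and i0: "i0 < n" "y i0 = 0"
    and le: "\<And>i. i < n \<Longrightarrow> \<alpha> * y i \<le> (\<Sum>j<n. A $$ (i, j) * y j)"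
  shows "\<alpha> < lam"
proof -
  have n: "n > 0" using k by auto
  have upos: "\<And>j. j < n \<Longrightarrow> u $ j > 0" using P by (simp add: perron_vec_def)
  obtain c k0 where k0: "k0 < n" and yc: "\<And>j. j < n \<Longrightarrow> y j \<le> c * u $ j" and eq: "y k0 = c * u $ k0"
    using max_ratio[where z="\<lambda>j. u $ j" and y=y, OF n upos] by metis
  have cpos: "c > 0"
  proof -
    have "0 < c * u $ k" using yc[OF k(1)] k(2) by simp
    with upos[OF k(1)] show ?thesis by (simp add: zero_less_mult_iff)
  qed
  have yk0: "y k0 > 0" using eq cpos upos[OF k0] by simp
  have "\<alpha> * y k0 \<le> (\<Sum>j<n. A $$ (k0, j) * y j)" by (rule le[OF k0])
  also have "\<dots> < (\<Sum>j<n. A $$ (k0, j) * (c * u $ j))"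
  proof (rule sum_strict_mono_ex1)
    show "\<forall>j\<in>{..<n}. A $$ (k0, j) * y j \<le> A $$ (k0, j) * (c * u $ j)"
      using Apos k0 yc by (auto intro!: mult_left_mono less_imp_le)
    show "\<exists>j\<in>{..<n}. A $$ (k0, j) * y j < A $$ (k0, j) * (c * u $ j)"
      using i0 Apos[OF k0 i0(1)] cpos upos[OF i0(1)] by (intro bexI[of _ i0]) auto
  qed simp
  also have "\<dots> = c * (\<Sum>j<n. A $$ (k0, j) * u $ j)" by (simp add: sum_distrib_left algebra_simps)
  also have "\<dots> = c * (lam * u $ k0)" using perron_eq[OF A P k0] by simp
  also have "\<dots> = lam * y k0" using eq by simp
  finally show ?thesis using yk0 by simp
qed

lemma cw_upper:
  assumes A: "A \<in> carrier_mat n n" and Anng: "\<And>i j. i < n \<Longrightarrow> j < n \<Longrightarrow> A $$ (i, j) \<ge> 0"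
    and P: "perron_vec A n u lam" and n: "n > 0"
    and ypos: "\<And>j. j < n \<Longrightarrow> y j > 0"
    and le: "\<And>i. i < n \<Longrightarrow> (\<Sum>j<n. A $$ (i, j) * y j) \<le> \<beta> * y i"
  shows "lam \<le> \<beta>"
proof -
  have upos: "\<And>j. j < n \<Longrightarrow> u $ j > 0" using P by (simp add: perron_vec_def)
  obtain c k0 where k0: "k0 < n" and uc: "\<And>j. j < n \<Longrightarrow> u $ j \<le> c * y j" and eq: "u $ k0 = c * y k0"
    using max_ratio[where z=y and y="\<lambda>j. u $ j", OF n ypos] by metis
  have cpos: "c > 0" using eq upos[OF k0] ypos[OF k0] by (simp add: zero_less_mult_iff)
  have "lam * u $ k0 = (\<Sum>j<n. A $$ (k0, j) * u $ j)" using perron_eq[OF A P k0] by simp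
  also have "\<dots> \<le> (\<Sum>j<n. A $$ (k0, j) * (c * y j))"
    by (intro sum_mono mult_left_mono uc Anng k0) auto
  also have "\<dots> = c * (\<Sum>j<n. A $$ (k0, j) * y j)" by (simp add: sum_distrib_left algebra_simps)
  also have "\<dots> \<le> c * (\<beta> * y k0)" using le[OF k0] cpos by simp
  also have "\<dots> = \<beta> * u $ k0" using eq by simp
  finally show ?thesis using upos[OF k0] by simp
qed

lemma eigen_abs_bound:
  assumes A: "A \<in> carrier_mat n n" and Anng: "\<And>i j. i < n \<Longrightarrow> j < n \<Longrightarrow> A $$ (i, j) \<ge> 0"
    and P: "perron_vec A n u lam"
    and v: "v \<in> carrier_vec n" "v \<noteq> 0\<^sub>v n" "A *\<^sub>v v = x \<cdot>\<^sub>v v"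
  shows "\<bar>x\<bar> \<le> lam"
proof -
  obtain k where k: "k < n" "v $ k \<noteq> 0" using v(1,2) by (metis eq_vecI carrier_vecD index_zero_vec)
  show ?thesis
  proof (rule cw_lower[OF A Anng P, of "\<lambda>j. \<bar>v $ j\<bar>" k])
    fix i assume i: "i < n"
    have "\<bar>x\<bar> * \<bar>v $ i\<bar> = \<bar>(A *\<^sub>v v) $ i\<bar>" using v(3) v(1) i by (simp add: abs_mult)
    also have "\<dots> = \<bar>\<Sum>j<n. A $$ (i, j) * v $ j\<bar>" using mv_index[OF A v(1) i] by simp
    also have "\<dots> \<le> (\<Sum>j<n. \<bar>A $$ (i, j) * v $ j\<bar>)" by (rule sum_abs)
    also have "\<dots> = (\<Sum>j<n. A $$ (i, j) * \<bar>v $ j\<bar>)" using Anng i by (intro sum.cong) (auto simp: abs_mult)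
    finally show "\<bar>x\<bar> * \<bar>v $ i\<bar> \<le> (\<Sum>j<n. A $$ (i, j) * \<bar>v $ j\<bar>)" .
  qed (use k in auto)
qed

lemma det_char: assumes A: "(A :: real mat) \<in> carrier_mat n n"
  shows "Determinant.det (x \<cdot>\<^sub>m 1\<^sub>m n - A) = poly (char_poly A) x"
proof -
  have "- char_matrix A x = x \<cdot>\<^sub>m 1\<^sub>m n - A"
    using A by (intro eq_matI) (auto simp: char_matrix_def)
  then show ?thesis using char_poly_matrix[OF A, of x] by simp
qed

lemma poly_pos_beyond:
  fixes p :: "real poly"
  assumes lc: "lead_coeff p > 0" and nz: "\<And>x. x \<ge> a0 \<Longrightarrow> poly p x \<noteq> 0"
  shows "poly p a0 > 0"
proof (rule ccontr)
  assume "\<not> poly p a0 > 0"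
  then have le: "poly p a0 \<le> 0" by simp
  obtain N where N: "\<And>x. x \<ge> N \<Longrightarrow> poly p x \<ge> lead_coeff p" using poly_pinfty_gt_lc[OF lc] by blast
  define b where "b = max a0 N"
  have "poly p b > 0" using N[of b] lc unfolding b_def by simp
  moreover have "a0 \<le> b" unfolding b_def by simp
  moreover have "continuous_on {a0..b} (poly p)" by (intro continuous_intros)
  ultimately obtain x where "a0 \<le> x" "x \<le> b" "poly p x = 0"
    using IVT'[of "poly p" a0 0 b] le by auto
  with nz show False by blast
qed

lemma mat_erase_index: "A \<in> carrier_mat n n \<Longrightarrow> i < n \<Longrightarrow> j < n \<Longrightarrow>
   mat_erase A i0 i0 $$ (i, j) = (if i = i0 \<or> j = i0 then 0 else A $$ (i, j))"
  by (auto simp: mat_erase_def)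

lemma vec_nonzero: "v \<in> carrier_vec n \<Longrightarrow> v \<noteq> 0\<^sub>v n \<Longrightarrow> \<exists>k<n. v $ k \<noteq> 0"
  by (metis eq_vecI carrier_vecD index_zero_vec)

lemma erase_eig_bound:
  assumes A: "A \<in> carrier_mat n n" and Apos: "\<And>i j. i < n \<Longrightarrow> j < n \<Longrightarrow> A $$ (i, j) > 0"
    and P: "perron_vec A n u lam" and i0: "i0 < n"
    and v: "v \<in> carrier_vec n" "v \<noteq> 0\<^sub>v n" "mat_erase A i0 i0 *\<^sub>v v = x \<cdot>\<^sub>v v" and x: "x \<noteq> 0"
  shows "\<bar>x\<bar> < lam"
proof -
  let ?E = "mat_erase A i0 i0"
  have E: "?E \<in> carrier_mat n n" using A by simp
  obtain k where k: "k < n" "v $ k \<noteq> 0" using vec_nonzero[OF v(1,2)] by blast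
  have Ev: "(?E *\<^sub>v v) $ i = (\<Sum>j<n. ?E $$ (i, j) * v $ j)" if "i < n" for i
    using mv_index[OF E v(1) that] .
  have "x * v $ i0 = 0"
  proof -
    have "x * v $ i0 = (?E *\<^sub>v v) $ i0" using v(1,3) i0 by simp
    also have "\<dots> = 0" using Ev[OF i0] A i0 by (simp add: mat_erase_index)
    finally show ?thesis .
  qed
  then have vi0: "v $ i0 = 0" using x by simp
  show ?thesis
  proof (rule cw_lower_strict[OF A Apos P, of "\<lambda>j. \<bar>v $ j\<bar>" k i0])
    fix i assume i: "i < n"
    have "\<bar>x\<bar> * \<bar>v $ i\<bar> = \<bar>(?E *\<^sub>v v) $ i\<bar>" using v(3) v(1) i by (simp add: abs_mult)
    also have "\<dots> = \<bar>\<Sum>j<n. ?E $$ (i, j) * v $ j\<bar>" using Ev[OF i] by simp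
    also have "\<dots> \<le> (\<Sum>j<n. \<bar>?E $$ (i, j) * v $ j\<bar>)" by (rule sum_abs)
    also have "\<dots> \<le> (\<Sum>j<n. A $$ (i, j) * \<bar>v $ j\<bar>)"
      using Apos i A by (intro sum_mono) (auto simp: abs_mult mat_erase_index less_imp_le)
    finally show "\<bar>x\<bar> * \<bar>v $ i\<bar> \<le> (\<Sum>j<n. A $$ (i, j) * \<bar>v $ j\<bar>)" .
  qed (use k i0 vi0 in auto)
qed

lemma perron_lam_pos:
  assumes A: "A \<in> carrier_mat n n" and Apos: "\<And>i j. i < n \<Longrightarrow> j < n \<Longrightarrow> A $$ (i, j) > 0"
    and P: "perron_vec A n u lam" and n: "n > 0"
  shows "lam > 0"
proof -
  have upos: "\<And>j. j < n \<Longrightarrow> u $ j > 0" using P by (simp add: perron_vec_def)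
  have "0 < (\<Sum>j<n. A $$ (0, j) * u $ j)" using n Apos upos by (intro sum_pos) auto
  then have "0 < lam * u $ 0" using perron_eq[OF A P n] by simp
  with upos[OF n] show ?thesis by (simp add: zero_less_mult_iff)
qed

lemma pderiv_pos:
  assumes A: "A \<in> carrier_mat n n" and Apos: "\<And>i j. i < n \<Longrightarrow> j < n \<Longrightarrow> A $$ (i, j) > 0"
    and P: "perron_vec A n u lam" and n: "n > 0"
  shows "poly (pderiv (char_poly A)) lam > 0"
proof -
  have lam: "lam > 0" by (rule perron_lam_pos[OF A Apos P n])
  have trm: "poly (char_poly (mat_erase A i i)) lam > 0" if i: "i < n" for i
  proof (rule poly_pos_beyond)
    have E: "mat_erase A i i \<in> carrier_mat n n" using A by simp
    show "lead_coeff (char_poly (mat_erase A i i)) > 0" using degree_monic_char_poly[OF E] by simp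
    fix x assume x: "x \<ge> lam"
    show "poly (char_poly (mat_erase A i i)) x \<noteq> 0"
    proof
      assume "poly (char_poly (mat_erase A i i)) x = 0"
      then have "eigenvalue (mat_erase A i i) x" using eigenvalue_root_char_poly[OF E] by simp
      then obtain v where v: "v \<in> carrier_vec n" "v \<noteq> 0\<^sub>v n" "mat_erase A i i *\<^sub>v v = x \<cdot>\<^sub>v v"
        unfolding eigenvalue_def eigenvector_def using E by auto
      have "\<bar>x\<bar> < lam" using erase_eig_bound[OF A Apos P i v] x lam by simp
      with x show False by simp
    qed
  qed
  have "lam * poly (pderiv (char_poly A)) lam = poly (monom 1 1 * pderiv (char_poly A)) lam"
    by (simp add: poly_monom)
  also have "\<dots> = (\<Sum>i<n. poly (char_poly (mat_erase A i i)) lam)"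
    unfolding pderiv_char_poly_mat_erase[OF A] by (simp add: poly_sum)
  also have "\<dots> > 0" using n trm by (intro sum_pos) auto
  finally show ?thesis using lam by (simp add: zero_less_mult_iff)
qed

lemma char_roots_finite: "(A :: real mat) \<in> carrier_mat n n \<Longrightarrow> finite {x. poly (char_poly A) x = 0}"
proof -
  assume A: "A \<in> carrier_mat n n"
  have "char_poly A \<noteq> 0" using degree_monic_char_poly[OF A] by auto
  then show ?thesis by (rule poly_roots_finite)
qed

lemma perron_max_root:
  assumes A: "A \<in> carrier_mat n n" and Apos: "\<And>i j. i < n \<Longrightarrow> j < n \<Longrightarrow> A $$ (i, j) > 0"
    and P: "perron_vec A n u lam" and n: "n > 0"
  shows "Max {x. poly (char_poly A) x = 0} = lam"
proof (rule Max_eqI[OF char_roots_finite[OF A]])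
  have "eigenvector A u lam"
  proof -
    have "u \<noteq> 0\<^sub>v n" using P n by (auto simp: perron_vec_def)
    then show ?thesis using P A unfolding eigenvector_def perron_vec_def by auto
  qed
  then show "lam \<in> {x. poly (char_poly A) x = 0}"
    using eigenvalue_root_char_poly[OF A] eigenvalue_def by blast
  fix x assume "x \<in> {x. poly (char_poly A) x = 0}"
  then have "eigenvalue A x" using eigenvalue_root_char_poly[OF A] by simp
  then obtain v where v: "v \<in> carrier_vec n" "v \<noteq> 0\<^sub>v n" "A *\<^sub>v v = x \<cdot>\<^sub>v v"
    unfolding eigenvalue_def eigenvector_def using A by auto
  have "\<bar>x\<bar> \<le> lam" by (rule eigen_abs_bound[OF A _ P v]) (use Apos in \<open>auto intro: less_imp_le\<close>)
  then show "x \<le> lam" by simp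
qed

lemma lin4pos:
  fixes c0 c1 c2 c3 x0 x1 x2 x3 :: real
  assumes "c0 > 0" "c1 > 0" "c2 > 0" "c3 > 0" "x0 \<ge> 0" "x1 \<ge> 0" "x2 \<ge> 0" "x3 \<ge> 0"
    "x0 + x1 + x2 + x3 = 1"
  shows "c0 * x0 + c1 * x1 + c2 * x2 + c3 * x3 > 0"
proof -
  have nn: "c0 * x0 \<ge> 0" "c1 * x1 \<ge> 0" "c2 * x2 \<ge> 0" "c3 * x3 \<ge> 0" using assms by auto
  have "x0 > 0 \<or> x1 > 0 \<or> x2 > 0 \<or> x3 > 0" using assms by linarith
  then have "c0 * x0 > 0 \<or> c1 * x1 > 0 \<or> c2 * x2 > 0 \<or> c3 * x3 > 0" using assms by auto
  then show ?thesis using nn by linarith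
qed

definition comp4 :: "real \<times> real \<times> real \<times> real \<Rightarrow> nat \<Rightarrow> real" where
  "comp4 z i = [fst z, fst (snd z), fst (snd (snd z)), snd (snd (snd z))] ! i"

lemma perron_exists4:
  assumes A: "A \<in> carrier_mat 4 4" and Apos: "\<And>i j. i < 4 \<Longrightarrow> j < 4 \<Longrightarrow> A $$ (i, j) > 0"
  shows "\<exists>u lam. perron_vec A 4 u lam"
proof -
  define Y where "Y i z = A $$ (i, 0) * fst z + A $$ (i, 1) * fst (snd z) + A $$ (i, 2) * fst (snd (snd z))
      + A $$ (i, 3) * snd (snd (snd z))" for i and z :: "real \<times> real \<times> real \<times> real"
  define s where "s z = Y 0 z + Y 1 z + Y 2 z + Y 3 z" for z
  define f where "f z = (Y 0 z / s z, Y 1 z / s z, Y 2 z / s z, Y 3 z / s z)" for z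
  define S where "S = {z :: real \<times> real \<times> real \<times> real. 0 \<le> fst z \<and> 0 \<le> fst (snd z) \<and> 0 \<le> fst (snd (snd z))
      \<and> 0 \<le> snd (snd (snd z)) \<and> fst z + fst (snd z) + fst (snd (snd z)) + snd (snd (snd z)) = 1}"
  have Ypos: "Y i z > 0" if "z \<in> S" "i < 4" for i z
    using that unfolding S_def Y_def by (intro lin4pos Apos) auto
  have spos: "s z > 0" if "z \<in> S" for z unfolding s_def using Ypos[OF that] by (simp add: add_pos_pos)
  have "closed S" unfolding S_def
    by (intro closed_Collect_conj closed_Collect_le closed_Collect_eq continuous_on_fst continuous_on_snd continuous_on_add continuous_on_const continuous_on_compose2[OF continuous_on_fst] continuous_on_compose2[OF continuous_on_snd]) auto
  moreover have "S \<subseteq> {0..(1::real)} \<times> {0..(1::real)} \<times> {0..(1::real)} \<times> {0..(1::real)}" unfolding S_def by auto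
  moreover have "compact ({0..(1::real)} \<times> {0..(1::real)} \<times> {0..(1::real)} \<times> {0..(1::real)})"
    by (auto intro!: compact_Times compact_Icc)
  ultimately have cS: "compact S"
    by (metis closed_Int_compact Int_absorb2)
  have vS: "convex S"
  proof (rule convexI)
    fix x y :: "real \<times> real \<times> real \<times> real" and u v :: real
    assume x: "x \<in> S" and y: "y \<in> S" and u: "0 \<le> u" and v: "0 \<le> v" and uv: "u + v = 1"
    have e: "u * fst x + v * fst y + (u * fst (snd x) + v * fst (snd y)) + (u * fst (snd (snd x)) + v * fst (snd (snd y)))
        + (u * snd (snd (snd x)) + v * snd (snd (snd y)))
       = u * (fst x + fst (snd x) + fst (snd (snd x)) + snd (snd (snd x)))
         + v * (fst y + fst (snd y) + fst (snd (snd y)) + snd (snd (snd y)))" by (simp add: algebra_simps)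
    have xs: "fst x + fst (snd x) + fst (snd (snd x)) + snd (snd (snd x)) = 1"
      and ys: "fst y + fst (snd y) + fst (snd (snd y)) + snd (snd (snd y)) = 1" using x y by (simp_all add: S_def)
    have nn: "0 \<le> fst x" "0 \<le> fst (snd x)" "0 \<le> fst (snd (snd x))" "0 \<le> snd (snd (snd x))"
      "0 \<le> fst y" "0 \<le> fst (snd y)" "0 \<le> fst (snd (snd y))" "0 \<le> snd (snd (snd y))" using x y by (simp_all add: S_def)
    show "u *\<^sub>R x + v *\<^sub>R y \<in> S" unfolding S_def mem_Collect_eq
      using e xs ys uv u v nn by (simp add: add_nonneg_nonneg mult_nonneg_nonneg)
  qed
  have neS: "S \<noteq> {}" unfolding S_def by (intro notI) (drule equals0D[of _ "(1, 0, 0, 0)"], simp)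
  have cY: "continuous_on S (Y i)" for i unfolding Y_def by (intro continuous_intros)
  have cs: "continuous_on S s" unfolding s_def by (intro continuous_intros cY)
  have sne: "\<forall>z\<in>S. s z \<noteq> 0" using spos by (metis less_irrefl)
  have cf: "continuous_on S f" unfolding f_def
    by (intro continuous_on_Pair continuous_on_divide cY cs sne)
  have fS: "f \<in> S \<rightarrow> S"
  proof
    fix z assume z: "z \<in> S"
    have "(Y 0 z + Y 1 z + Y 2 z + Y 3 z) / s z = 1" using spos[OF z] by (simp add: s_def)
    then have "Y 0 z / s z + Y 1 z / s z + Y 2 z / s z + Y 3 z / s z = 1" by (simp add: add_divide_distrib)
    moreover have "0 \<le> Y i z / s z" if "i < 4" for i using Ypos[OF z that] spos[OF z] by simp
    ultimately show "f z \<in> S" unfolding S_def f_def mem_Collect_eq fst_conv snd_conv by simp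
  qed
  obtain z where z: "z \<in> S" "f z = z" using brouwer[OF cS vS neS cf fS] by blast
  define u where "u = vec 4 (comp4 z)"
  have comp_eq: "comp4 z i = Y i z / s z" if "i < 4" for i
  proof -
    have "comp4 (f z) i = Y i z / s z" using i4_cases[OF that] by (auto simp: comp4_def f_def)
    then show ?thesis using z(2) by simp
  qed
  have Ysum: "Y i z = (\<Sum>j<4. A $$ (i, j) * comp4 z j)" for i
    by (simp add: Y_def sum4 comp4_def)
  have "perron_vec A 4 u (s z)" unfolding perron_vec_def
  proof (intro conjI allI impI)
    show "u \<in> carrier_vec 4" by (simp add: u_def)
    fix i :: nat assume i: "i < 4"
    show "u $ i > 0" using i comp_eq[OF i] Ypos[OF z(1) i] spos[OF z(1)] by (simp add: u_def)
  next
    show "A *\<^sub>v u = s z \<cdot>\<^sub>v u"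
    proof (rule eq_vecI)
      show "dim_vec (A *\<^sub>v u) = dim_vec (s z \<cdot>\<^sub>v u)" using A by (simp add: u_def)
      fix i assume "i < dim_vec (s z \<cdot>\<^sub>v u)"
      then have i: "i < 4" by (simp add: u_def)
      have "(A *\<^sub>v u) $ i = (\<Sum>j<4. A $$ (i, j) * u $ j)" by (rule mv_index[OF A _ i]) (simp add: u_def)
      also have "\<dots> = Y i z" unfolding Ysum by (intro sum.cong) (auto simp: u_def)
      also have "\<dots> = s z * comp4 z i" using comp_eq[OF i] spos[OF z(1)] by simp
      finally show "(A *\<^sub>v u) $ i = (s z \<cdot>\<^sub>v u) $ i" using i by (simp add: u_def)
    qed
  qed
  then show ?thesis by blast
qed

section \<open>A one-dimensional implicit function lemma\<close>

lemma ift1: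
  fixes G :: "real \<times> real \<Rightarrow> real" and L :: "real \<Rightarrow> real"
  assumes dG: "(G has_derivative (\<lambda>(h, k). h * pa + k * pb)) (at (t0, L t0))"
    and pb: "pb \<noteq> 0" and cL: "isCont L t0"
    and zero: "eventually (\<lambda>t. G (t, L t) = 0) (nhds t0)"
  shows "(L has_real_derivative (- pa / pb)) (at t0)"
proof -
  have G0: "G (t0, L t0) = 0" using zero unfolding eventually_nhds by blast
  obtain r0 where r0: "r0 > 0" "\<And>t. \<bar>t - t0\<bar> < r0 \<Longrightarrow> G (t, L t) = 0"
    using zero unfolding eventually_nhds_metric dist_real_def by (auto simp: abs_minus_commute)
  have "(L has_derivative (\<lambda>h. h * (- pa / pb))) (at t0)"
    unfolding has_derivative_at_alt
  proof (intro conjI allI impI)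
    show "bounded_linear (\<lambda>h. h * (- pa / pb))" by (rule bounded_linear_mult_left)
    fix \<epsilon> :: real assume \<epsilon>: "\<epsilon> > 0"
    define C where "C = (2 * \<bar>pa\<bar> + \<bar>pb\<bar>) / \<bar>pb\<bar>"
    have Cpos: "C > 0" unfolding C_def using pb by (simp add: add_nonneg_pos)
    define \<eta> where "\<eta> = min (\<bar>pb\<bar> / 2) (\<epsilon> * \<bar>pb\<bar> / (1 + C))"
    have \<eta>pos: "\<eta> > 0" unfolding \<eta>_def using pb \<epsilon> Cpos by simp
    obtain dG where dG: "dG > 0" "\<And>z. norm (z - (t0, L t0)) < dG \<Longrightarrow>
        norm (G z - G (t0, L t0) - (case z - (t0, L t0) of (h, k) \<Rightarrow> h * pa + k * pb)) \<le> \<eta> * norm (z - (t0, L t0))"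
      using dG[unfolded has_derivative_at_alt] \<eta>pos by blast
    obtain dL where dL: "dL > 0" "\<And>t. \<bar>t - t0\<bar> < dL \<Longrightarrow> \<bar>L t - L t0\<bar> < dG / 2"
      using cL[unfolded continuous_at_eps_delta] dG(1) unfolding dist_real_def
      by (metis half_gt_zero)
    define d where "d = min r0 (min dL (dG / 2))"
    have dpos: "d > 0" unfolding d_def using r0 dL dG by simp
    show "\<exists>d>0. \<forall>t. norm (t - t0) < d \<longrightarrow> norm (L t - L t0 - (t - t0) * (- pa / pb)) \<le> \<epsilon> * norm (t - t0)"
    proof (intro exI[of _ d] conjI allI impI dpos)
      fix t assume "norm (t - t0) < d"
      then have t: "\<bar>t - t0\<bar> < d" by simp
      define dt where "dt = t - t0"
      define dx where "dx = L t - L t0"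
      have Gt: "G (t, L t) = 0" using r0(2)[of t] t unfolding d_def by simp
      have nz: "norm ((t, L t) - (t0, L t0)) < dG"
      proof -
        have "norm ((t, L t) - (t0, L t0)) = norm (dt, dx)" by (simp add: dt_def dx_def)
        also have "\<dots> \<le> \<bar>dt\<bar> + \<bar>dx\<bar>" using norm_Pair_le[of dt dx] by simp
        also have "\<dots> < dG / 2 + dG / 2"
          using t dL(2)[of t] unfolding d_def dt_def dx_def by (intro add_strict_mono) auto
        finally show ?thesis by simp
      qed
      have key: "\<bar>dt * pa + dx * pb\<bar> \<le> \<eta> * (\<bar>dt\<bar> + \<bar>dx\<bar>)"
      proof -
        have "\<bar>dt * pa + dx * pb\<bar> = norm (G (t, L t) - G (t0, L t0) - (case (t, L t) - (t0, L t0) of (h, k) \<Rightarrow> h * pa + k * pb))"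
          using Gt G0 by (simp add: dt_def dx_def)
        also have "\<dots> \<le> \<eta> * norm ((t, L t) - (t0, L t0))" by (rule dG(2)[OF nz])
        also have "norm ((t, L t) - (t0, L t0)) \<le> \<bar>dt\<bar> + \<bar>dx\<bar>"
          using norm_Pair_le[of dt dx] by (simp add: dt_def dx_def)
        finally show ?thesis using \<eta>pos by (simp add: mult_left_mono)
      qed
      have e1: "\<eta> \<le> \<bar>pb\<bar> / 2" unfolding \<eta>_def by (rule min.cobounded1)
      have "\<eta> \<le> \<epsilon> * \<bar>pb\<bar> / (1 + C)" unfolding \<eta>_def by (rule min.cobounded2)
      then have e2: "\<eta> * (1 + C) \<le> \<epsilon> * \<bar>pb\<bar>" using Cpos by (simp add: pos_le_divide_eq)
      have "\<bar>pb\<bar> * \<bar>dx\<bar> \<le> \<bar>pa\<bar> * \<bar>dt\<bar> + \<eta> * (\<bar>dt\<bar> + \<bar>dx\<bar>)"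
      proof -
        have "\<bar>pb\<bar> * \<bar>dx\<bar> = \<bar>dx * pb\<bar>" by (simp add: abs_mult)
        also have "\<dots> \<le> \<bar>dt * pa + dx * pb\<bar> + \<bar>dt * pa\<bar>" by linarith
        finally have "\<bar>pb\<bar> * \<bar>dx\<bar> \<le> \<bar>dt * pa + dx * pb\<bar> + \<bar>dt\<bar> * \<bar>pa\<bar>" by (simp add: abs_mult)
        then show ?thesis using key by (simp add: mult.commute)
      qed
      then have "(\<bar>pb\<bar> - \<eta>) * \<bar>dx\<bar> \<le> (\<bar>pa\<bar> + \<eta>) * \<bar>dt\<bar>" by (simp add: algebra_simps)
      moreover have "\<bar>pb\<bar> / 2 \<le> \<bar>pb\<bar> - \<eta>" using e1 by simp
      ultimately have "\<bar>pb\<bar> / 2 * \<bar>dx\<bar> \<le> (\<bar>pa\<bar> + \<bar>pb\<bar> / 2) * \<bar>dt\<bar>"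
        using e1 by (smt (verit) abs_ge_zero mult_right_mono)
      then have dxC: "\<bar>dx\<bar> \<le> C * \<bar>dt\<bar>" unfolding C_def using pb by (simp add: field_simps)
      have "\<bar>dx - dt * (- pa / pb)\<bar> = \<bar>dt * pa + dx * pb\<bar> / \<bar>pb\<bar>" using pb
        by (simp add: field_simps abs_div[symmetric] diff_divide_distrib)
      also have "\<dots> \<le> \<eta> * (\<bar>dt\<bar> + \<bar>dx\<bar>) / \<bar>pb\<bar>" using key pb by (simp add: divide_right_mono)
      also have "\<dots> \<le> \<eta> * ((1 + C) * \<bar>dt\<bar>) / \<bar>pb\<bar>"
        using dxC \<eta>pos pb by (intro divide_right_mono mult_left_mono) (auto simp: algebra_simps)
      also have "\<dots> = (\<eta> * (1 + C)) * \<bar>dt\<bar> / \<bar>pb\<bar>" by simp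
      also have "\<dots> \<le> (\<epsilon> * \<bar>pb\<bar>) * \<bar>dt\<bar> / \<bar>pb\<bar>"
        using e2 pb by (intro divide_right_mono mult_right_mono) auto
      also have "\<dots> = \<epsilon> * \<bar>dt\<bar>" using pb by simp
      finally show "norm (L t - L t0 - (t - t0) * (- pa / pb)) \<le> \<epsilon> * norm (t - t0)"
        by (simp add: dt_def dx_def)
    qed
  qed
  moreover have "(\<lambda>h. h * (- pa / pb)) = (*) (- pa / pb)" by (rule ext) (simp only: mult.commute)
  ultimately show ?thesis unfolding has_field_derivative_def by simp
qed

section \<open>The characteristic function as a sum over permutations\<close>

definition P4 :: "(nat \<Rightarrow> nat) set" where "P4 = {p. p permutes {0..<4}}"

lemma P4_fin: "finite P4" unfolding P4_def by (rule finite_permutations) simp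

definition Mz :: "(nat \<Rightarrow> nat \<Rightarrow> real \<Rightarrow> real) \<Rightarrow> (nat \<Rightarrow> nat) \<Rightarrow> nat \<Rightarrow> real \<times> real \<Rightarrow> real" where
  "Mz e p i z = (if i = p i then snd z else 0) - e i (p i) (fst z)"

definition PF :: "(nat \<Rightarrow> nat \<Rightarrow> real \<Rightarrow> real) \<Rightarrow> real \<times> real \<Rightarrow> real" where
  "PF e z = (\<Sum>p\<in>P4. signof p * (\<Prod>i\<in>{0..<4}. Mz e p i z))"

definition Ftf :: "(nat \<Rightarrow> nat \<Rightarrow> real \<Rightarrow> real) \<Rightarrow> (nat \<Rightarrow> nat \<Rightarrow> real \<Rightarrow> real) \<Rightarrow> real \<times> real \<Rightarrow> real" where
  "Ftf e e' z = (\<Sum>p\<in>P4. signof p * (\<Sum>i\<in>{0..<4}. (- e' i (p i) (fst z)) * (\<Prod>j\<in>{0..<4} - {i}. Mz e p j z)))"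

definition Fxf :: "(nat \<Rightarrow> nat \<Rightarrow> real \<Rightarrow> real) \<Rightarrow> real \<times> real \<Rightarrow> real" where
  "Fxf e z = (\<Sum>p\<in>P4. signof p * (\<Sum>i\<in>{0..<4}. (if i = p i then 1 else 0) * (\<Prod>j\<in>{0..<4} - {i}. Mz e p j z)))"

lemma comp_fst_deriv:
  assumes "(f has_real_derivative f') (at (fst z))"
  shows "((\<lambda>z. f (fst z)) has_derivative (\<lambda>hk. f' * fst hk)) (at z)"
proof -
  have d: "(f has_derivative (*) f') (at (fst z))" using assms by (simp add: has_field_derivative_def)
  show ?thesis using has_derivative_compose[OF has_derivative_fst[OF has_derivative_ident] d] by simp
qed

lemma Mz_deriv:
  assumes "(e i (p i) has_real_derivative e' i (p i) (fst z)) (at (fst z))"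
  shows "(Mz e p i has_derivative (\<lambda>hk. (if i = p i then snd hk else 0) - e' i (p i) (fst z) * fst hk)) (at z)"
proof -
  have s: "((\<lambda>z. if i = p i then snd z else 0) has_derivative (\<lambda>hk. if i = p i then snd hk else (0::real))) (at z)"
    by (cases "i = p i") (auto intro: has_derivative_snd[OF has_derivative_ident] has_derivative_const)
  show ?thesis unfolding Mz_def by (rule has_derivative_diff[OF s comp_fst_deriv[OF assms]])
qed

lemma PF_deriv:
  assumes d: "\<And>i j. (e i j has_real_derivative e' i j (fst z)) (at (fst z))"
  shows "(PF e has_derivative (\<lambda>(h, k). h * Ftf e e' z + k * Fxf e z)) (at z)"
proof -
  have "(PF e has_derivative (\<lambda>hk. \<Sum>p\<in>P4. signof p * (\<Sum>i\<in>{0..<4}.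
      ((if i = p i then snd hk else 0) - e' i (p i) (fst z) * fst hk) * (\<Prod>j\<in>{0..<4} - {i}. Mz e p j z)))) (at z)"
    unfolding PF_def[abs_def]
    by (intro has_derivative_sum has_derivative_mult_right has_derivative_prod Mz_deriv d)
  then show ?thesis
  proof (rule has_derivative_eq_rhs)
    show "(\<lambda>hk. \<Sum>p\<in>P4. signof p * (\<Sum>i\<in>{0..<4}.
      ((if i = p i then snd hk else 0) - e' i (p i) (fst z) * fst hk) * (\<Prod>j\<in>{0..<4} - {i}. Mz e p j z)))
      = (\<lambda>(h, k). h * Ftf e e' z + k * Fxf e z)"
    proof (rule ext, clarify)
      fix h k :: real
      have "(\<Sum>p\<in>P4. signof p * (\<Sum>i\<in>{0..<4}.
          ((if i = p i then k else 0) - e' i (p i) (fst z) * h) * (\<Prod>j\<in>{0..<4} - {i}. Mz e p j z)))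
        = (\<Sum>p\<in>P4. h * (signof p * (\<Sum>i\<in>{0..<4}. (- e' i (p i) (fst z)) * (\<Prod>j\<in>{0..<4} - {i}. Mz e p j z)))
             + k * (signof p * (\<Sum>i\<in>{0..<4}. (if i = p i then 1 else 0) * (\<Prod>j\<in>{0..<4} - {i}. Mz e p j z))))"
      proof (rule sum.cong[OF refl])
        fix p
        have pt: "((if i = p i then k else 0) - c * h) * Q = h * ((- c) * Q) + k * ((if i = p i then 1 else 0) * Q)"
          for i :: nat and c Q :: real by (cases "i = p i") (simp_all add: algebra_simps)
        have "(\<Sum>i\<in>{0..<4}. ((if i = p i then k else 0) - e' i (p i) (fst z) * h) * (\<Prod>j\<in>{0..<4} - {i}. Mz e p j z))
          = h * (\<Sum>i\<in>{0..<4}. (- e' i (p i) (fst z)) * (\<Prod>j\<in>{0..<4} - {i}. Mz e p j z))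
            + k * (\<Sum>i\<in>{0..<4}. (if i = p i then 1 else 0) * (\<Prod>j\<in>{0..<4} - {i}. Mz e p j z))"
          by (simp only: pt sum.distrib sum_distrib_left)
        then show "signof p * (\<Sum>i\<in>{0..<4}. ((if i = p i then k else 0) - e' i (p i) (fst z) * h) * (\<Prod>j\<in>{0..<4} - {i}. Mz e p j z))
          = h * (signof p * (\<Sum>i\<in>{0..<4}. (- e' i (p i) (fst z)) * (\<Prod>j\<in>{0..<4} - {i}. Mz e p j z)))
             + k * (signof p * (\<Sum>i\<in>{0..<4}. (if i = p i then 1 else 0) * (\<Prod>j\<in>{0..<4} - {i}. Mz e p j z)))"
          by (simp add: algebra_simps)
      qed
      also have "\<dots> = h * Ftf e e' z + k * Fxf e z"
        by (simp add: Ftf_def Fxf_def sum.distrib sum_distrib_left)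
      finally show "(\<Sum>p\<in>P4. signof p * (\<Sum>i\<in>{0..<4}.
          ((if i = p i then snd (h, k) else 0) - e' i (p i) (fst z) * fst (h, k)) * (\<Prod>j\<in>{0..<4} - {i}. Mz e p j z)))
        = h * Ftf e e' z + k * Fxf e z" by (simp only: snd_conv fst_conv)
    qed
  qed
qed

lemma differentiable_prod':
  fixes f :: "'i \<Rightarrow> 'a::real_normed_vector \<Rightarrow> real"
  assumes "\<And>i. i \<in> I \<Longrightarrow> f i differentiable (at x)"
  shows "(\<lambda>x. \<Prod>i\<in>I. f i x) differentiable (at x)"
proof -
  from assms have "\<forall>i\<in>I. \<exists>D. (f i has_derivative D) (at x)" unfolding differentiable_def by blast
  then obtain D where "\<forall>i\<in>I. (f i has_derivative D i) (at x)" by metis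
  then show ?thesis by (intro differentiableI[OF has_derivative_prod]) auto
qed

lemma Ftf_Fxf_differentiable:
  assumes d: "\<And>i j. (e i j has_real_derivative e' i j (fst z)) (at (fst z))"
    and d': "\<And>i j. e' i j differentiable (at (fst z))"
  shows "Ftf e e' differentiable (at z)" "Fxf e differentiable (at z)"
proof -
  have dM: "Mz e p j differentiable (at z)" for p j
    by (rule differentiableI[OF Mz_deriv[where e=e and e'=e' and z=z and p=p and i=j, OF d]])
  have dE: "(\<lambda>z. e' i j (fst z)) differentiable (at z)" for i j
    by (rule differentiable_compose[where f="e' i j" and g=fst, OF d'])
       (simp add: differentiableI[OF has_derivative_fst[OF has_derivative_ident]])
  show "Ftf e e' differentiable (at z)" unfolding Ftf_def[abs_def]
    by (intro differentiable_sum[OF P4_fin] ballI differentiable_mult differentiable_const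
        differentiable_sum differentiable_minus dE differentiable_prod' dM) auto
  show "Fxf e differentiable (at z)" unfolding Fxf_def[abs_def]
    by (intro differentiable_sum[OF P4_fin] ballI differentiable_mult differentiable_const
        differentiable_sum differentiable_prod' dM) auto
qed

definition En :: "(pos set \<Rightarrow> real) \<Rightarrow> nat \<Rightarrow> nat \<Rightarrow> real" where
  "En J i l = cube_energy J (state (rr (i + 1))) (state l)"

definition ent :: "(pos set \<Rightarrow> real) \<Rightarrow> real \<Rightarrow> nat \<Rightarrow> nat \<Rightarrow> real \<Rightarrow> real" where
  "ent J kB i j t = (\<Sum>l\<in>GG (j + 1). exp (- En J i l / (kB * t)))"

definition ent' :: "(pos set \<Rightarrow> real) \<Rightarrow> real \<Rightarrow> nat \<Rightarrow> nat \<Rightarrow> real \<Rightarrow> real" where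
  "ent' J kB i j t = (\<Sum>l\<in>GG (j + 1). exp (- En J i l / (kB * t)) * (En J i l / (kB * t ^ 2)))"

lemma tau_ent: "i < 4 \<Longrightarrow> j < 4 \<Longrightarrow> tau J kB t $$ (i, j) = ent J kB i j t"
  by (simp add: tau_index Ssum_def theta_def ent_def En_def)

lemma GG_fin: "finite (GG j)" by (simp add: GG_def)
lemma GG_ne: "GG j \<noteq> {}" by (simp add: GG_def)

lemma tau_pos: "i < 4 \<Longrightarrow> j < 4 \<Longrightarrow> tau J kB t $$ (i, j) > 0"
  unfolding tau_ent ent_def by (intro sum_pos GG_fin GG_ne) auto

lemma ent_deriv:
  assumes "kB \<noteq> 0" "t \<noteq> 0"
  shows "(ent J kB i j has_real_derivative ent' J kB i j t) (at t)"
proof -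
  have d1: "((\<lambda>t. - c / (kB * t)) has_real_derivative c / (kB * t ^ 2)) (at t)" for c
  proof -
    have e: "(\<lambda>t. - c / (kB * t)) = (\<lambda>t. (- c / kB) * inverse t)" by (rule ext) (simp add: field_simps)
    have "((\<lambda>t. (- c / kB) * inverse t) has_real_derivative (- c / kB) * (- (inverse t ^ Suc (Suc 0)))) (at t)"
      by (intro DERIV_cmult DERIV_inverse assms(2))
    then show ?thesis unfolding e by (rule DERIV_cong) (use assms in \<open>simp add: field_simps power2_eq_square\<close>)
  qed
  show ?thesis unfolding ent_def[abs_def] ent'_def
    by (intro DERIV_sum DERIV_fun_exp d1)
qed

lemma ent'_diff:
  assumes "kB \<noteq> 0" "t \<noteq> 0"
  shows "ent' J kB i j differentiable (at t)"
proof -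
  have d1: "(\<lambda>t. exp (- c / (kB * t))) differentiable (at t)" for c
  proof -
    have "((\<lambda>t. - c / (kB * t)) has_real_derivative c / (kB * t ^ 2)) (at t)"
    proof -
      have e: "(\<lambda>t. - c / (kB * t)) = (\<lambda>t. (- c / kB) * inverse t)" by (rule ext) (simp add: field_simps)
      have "((\<lambda>t. (- c / kB) * inverse t) has_real_derivative (- c / kB) * (- (inverse t ^ Suc (Suc 0)))) (at t)"
        by (intro DERIV_cmult DERIV_inverse assms(2))
      then show ?thesis unfolding e by (rule DERIV_cong) (use assms in \<open>simp add: field_simps power2_eq_square\<close>)
    qed
    then have "((\<lambda>t. exp (- c / (kB * t))) has_real_derivative exp (- c / (kB * t)) * (c / (kB * t ^ 2))) (at t)"
      by (rule DERIV_fun_exp)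
    then show ?thesis using real_differentiable_def by blast
  qed
  have d2: "(\<lambda>t. c / (kB * t ^ 2)) differentiable (at t)" for c
    using assms by (intro differentiable_divide differentiable_const differentiable_mult differentiable_power differentiable_ident) auto
  show ?thesis unfolding ent'_def[abs_def]
    by (intro differentiable_sum GG_fin ballI differentiable_mult d1 d2)
qed

lemma det_PF: "Determinant.det (x \<cdot>\<^sub>m 1\<^sub>m 4 - tau J kB t) = PF (ent J kB) (t, x)"
proof -
  have c: "x \<cdot>\<^sub>m 1\<^sub>m 4 - tau J kB t \<in> carrier_mat 4 4" using tau_carrier[of J kB t] by auto
  show ?thesis unfolding det_def'[OF c] PF_def P4_def
  proof (intro sum.cong refl arg_cong2[where f="(*)"] prod.cong)
    fix p :: "nat \<Rightarrow> nat" and i :: nat assume p: "p \<in> {p. p permutes {0..<4}}" and i: "i \<in> {0..<4}"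
    have pi: "p i < 4" using permutes_in_image[of p "{0..<4}" i] p i by auto
    show "(x \<cdot>\<^sub>m 1\<^sub>m 4 - tau J kB t) $$ (i, p i) = Mz (ent J kB) p i (t, x)"
      using i pi by (simp add: Mz_def tau_carrier tau_ent)
  qed
qed

lemma tau_pos': "\<And>i j. i < 4 \<Longrightarrow> j < 4 \<Longrightarrow> tau J kB t $$ (i, j) > 0"
  by (rule tau_pos)

lemma perron_tau: "\<exists>u. perron_vec (tau J kB t) 4 u (lambda_max J kB t)"
proof -
  obtain u lam where P: "perron_vec (tau J kB t) 4 u lam"
    using perron_exists4[OF tau_carrier tau_pos'[where J=J and kB=kB and t=t]] by blast
  have "lambda_max J kB t = Max {x. poly (char_poly (tau J kB t)) x = 0}"
    unfolding lambda_max_def det_char[OF tau_carrier] ..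
  also have "\<dots> = lam" by (rule perron_max_root[OF tau_carrier tau_pos'[where J=J and kB=kB and t=t] P zero_less_numeral])
  finally show ?thesis using P by auto
qed

lemma lambda_pos: "lambda_max J kB t > 0"
proof -
  obtain u where P: "perron_vec (tau J kB t) 4 u (lambda_max J kB t)" using perron_tau by blast
  show ?thesis by (rule perron_lam_pos[OF tau_carrier tau_pos'[where J=J and kB=kB and t=t] P zero_less_numeral])
qed

lemma lambda_root: "poly (char_poly (tau J kB t)) (lambda_max J kB t) = 0"
proof -
  obtain u where P: "perron_vec (tau J kB t) 4 u (lambda_max J kB t)" using perron_tau by blast
  have "eigenvector (tau J kB t) u (lambda_max J kB t)"
  proof -
    have u0: "u $ 0 > 0" using P by (simp add: perron_vec_def)
    have "u \<noteq> 0\<^sub>v 4"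
    proof
      assume "u = 0\<^sub>v 4" with u0 show False by simp
    qed
    then show ?thesis using P tau_carrier unfolding eigenvector_def perron_vec_def by auto
  qed
  then show ?thesis using eigenvalue_root_char_poly[OF tau_carrier] eigenvalue_def by blast
qed

lemma limit_part:
  "(\<lambda>M. ln (partition_fn J kB M T) / (4 * real M)) \<longlonglongrightarrow> ln (lambda_max J kB T) / 4"
proof -
  obtain u where P: "perron_vec (tau J kB T) 4 u (lambda_max J kB T)" using perron_tau by blast
  show ?thesis
  proof (rule Z_limit[where S="{1..16}" and g="theta J kB T" and w="\<lambda>l. u $ cls l"])
    show "finite {1..16::nat}" "{1..16::nat} \<noteq> {}" by auto
    show "theta J kB T a b > 0" for a b by (simp add: theta_def)
    show "u $ cls a > 0" for a using P cls_lt[of a] by (simp add: perron_vec_def)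
    show "(\<Sum>l\<in>{1..16}. theta J kB T k l * u $ cls l) = lambda_max J kB T * u $ cls k" if "k \<in> {1..16}" for k
      using P that by (intro lift_eigen) (auto simp: perron_vec_def)
    show "partition_fn J kB M T = (\<Sum>ks\<in>{0..<M} \<rightarrow>\<^sub>E {1..16}. \<Prod>m<M. theta J kB T (ks m) (ks ((m + 1) mod M)))"
      if "M > 0" for M using partition_fn_eq[OF that] by simp
  qed
qed

section \<open>Regularity of the largest eigenvalue\<close>

lemma perron_perturb:
  assumes A: "A \<in> carrier_mat n n" and B: "B \<in> carrier_mat n n"
    and Anng: "\<And>i j. i < n \<Longrightarrow> j < n \<Longrightarrow> A $$ (i, j) \<ge> 0"
    and Bnng: "\<And>i j. i < n \<Longrightarrow> j < n \<Longrightarrow> B $$ (i, j) \<ge> 0"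
    and PA: "perron_vec A n u \<alpha>" and PB: "perron_vec B n w \<beta>" and n: "n > 0"
  shows "\<bar>\<beta> - \<alpha>\<bar> \<le> (\<Sum>i<n. \<Sum>j<n. \<bar>B $$ (i, j) - A $$ (i, j)\<bar> * u $ j / u $ i)"
proof -
  define D where "D = (\<Sum>i<n. \<Sum>j<n. \<bar>B $$ (i, j) - A $$ (i, j)\<bar> * u $ j / u $ i)"
  have upos: "\<And>j. j < n \<Longrightarrow> u $ j > 0" using PA by (simp add: perron_vec_def)
  have bound: "\<bar>(\<Sum>j<n. B $$ (i, j) * u $ j) - \<alpha> * u $ i\<bar> \<le> D * u $ i" if i: "i < n" for i
  proof -
    have "(\<Sum>j<n. B $$ (i, j) * u $ j) - \<alpha> * u $ i = (\<Sum>j<n. (B $$ (i, j) - A $$ (i, j)) * u $ j)"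
      using perron_eq[OF A PA i] by (simp add: sum_subtractf algebra_simps)
    also have "\<bar>\<dots>\<bar> \<le> (\<Sum>j<n. \<bar>B $$ (i, j) - A $$ (i, j)\<bar> * u $ j)"
      using upos by (intro order.trans[OF sum_abs] sum_mono) (simp add: abs_mult abs_of_pos)
    also have "\<dots> = (\<Sum>j<n. \<bar>B $$ (i, j) - A $$ (i, j)\<bar> * u $ j / u $ i) * u $ i"
      using upos[OF i] by (simp add: sum_distrib_right)
    also have "\<dots> \<le> D * u $ i"
    proof (rule mult_right_mono)
      show "(\<Sum>j<n. \<bar>B $$ (i, j) - A $$ (i, j)\<bar> * u $ j / u $ i) \<le> D" unfolding D_def
        using i upos by (intro member_le_sum[where f="\<lambda>i. \<Sum>j<n. \<bar>B $$ (i, j) - A $$ (i, j)\<bar> * u $ j / u $ i"] sum_nonneg)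
          (auto simp: zero_le_divide_iff upos less_imp_le)
    qed (use upos[OF i] in simp)
    finally show ?thesis .
  qed
  have "\<alpha> - D \<le> \<beta>"
  proof (rule cw_lower[OF B Bnng PB, of "\<lambda>j. u $ j" 0])
    fix i assume i: "i < n"
    show "(\<alpha> - D) * u $ i \<le> (\<Sum>j<n. B $$ (i, j) * u $ j)" using bound[OF i] by (simp add: algebra_simps abs_le_iff)
  qed (use upos n in \<open>auto intro: less_imp_le\<close>)
  moreover have "\<beta> \<le> \<alpha> + D"
  proof (rule cw_upper[OF B Bnng PB n, of "\<lambda>j. u $ j"])
    fix i assume i: "i < n"
    show "(\<Sum>j<n. B $$ (i, j) * u $ j) \<le> (\<alpha> + D) * u $ i" using bound[OF i] by (simp add: algebra_simps abs_le_iff)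
  qed (use upos in auto)
  ultimately show ?thesis unfolding D_def by linarith
qed

lemma ent_cont: "kB \<noteq> 0 \<Longrightarrow> t \<noteq> 0 \<Longrightarrow> isCont (ent J kB i j) t"
  by (rule DERIV_isCont[OF ent_deriv])

lemma lambda_cont:
  assumes kB: "kB \<noteq> 0" and t0: "t0 \<noteq> 0"
  shows "isCont (lambda_max J kB) t0"
proof -
  obtain u where PA: "perron_vec (tau J kB t0) 4 u (lambda_max J kB t0)" using perron_tau by blast
  define D where "D t = (\<Sum>i<4. \<Sum>j<4. \<bar>ent J kB i j t - ent J kB i j t0\<bar> * (u $ j / u $ i))" for t
  have le: "norm (lambda_max J kB t - lambda_max J kB t0) \<le> D t" for t
  proof -
    obtain w where PB: "perron_vec (tau J kB t) 4 w (lambda_max J kB t)" using perron_tau by blast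
    have "\<bar>lambda_max J kB t - lambda_max J kB t0\<bar>
        \<le> (\<Sum>i<4. \<Sum>j<4. \<bar>tau J kB t $$ (i, j) - tau J kB t0 $$ (i, j)\<bar> * u $ j / u $ i)"
      by (rule perron_perturb[OF tau_carrier tau_carrier _ _ PA PB])
         (simp_all add: less_imp_le[OF tau_pos])
    also have "\<dots> = D t" unfolding D_def by (intro sum.cong refl) (simp add: tau_ent)
    finally show ?thesis by simp
  qed
  have ce: "\<And>i j. continuous (at t0) (ent J kB i j)" using ent_cont[OF kB t0] .
  have cD: "continuous (at t0) D" unfolding D_def
    by (intro continuous_sum continuous_mult continuous_const continuous_rabs continuous_diff ce)
  then have "(D \<longlongrightarrow> D t0) (at t0)" by (simp add: continuous_at)
  moreover have "D t0 = 0" by (simp add: D_def)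
  ultimately have "(D \<longlongrightarrow> 0) (at t0)" by simp
  moreover have ev: "\<forall>t. norm (lambda_max J kB t - lambda_max J kB t0) \<le> D t" using le by blast
  ultimately have "((\<lambda>t. lambda_max J kB t - lambda_max J kB t0) \<longlongrightarrow> 0) (at t0)"
    using Lim_null_comparison[OF always_eventually[OF ev]] by blast
  then show ?thesis unfolding isCont_def by (simp add: LIM_zero_iff)
qed

abbreviation Ftl where "Ftl J kB t \<equiv> Ftf (ent J kB) (ent' J kB) (t, lambda_max J kB t)"
abbreviation Fxl where "Fxl J kB t \<equiv> Fxf (ent J kB) (t, lambda_max J kB t)"

lemma PF_poly: "PF (ent J kB) (t, x) = poly (char_poly (tau J kB t)) x"
  using det_PF[of x J kB t] det_char[OF tau_carrier, of x J kB t] by simp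

lemma lambda_deriv:
  assumes kB: "kB \<noteq> 0" and t0: "t0 \<noteq> 0"
  shows "Fxl J kB t0 > 0"
    and "(lambda_max J kB has_real_derivative (- Ftl J kB t0 / Fxl J kB t0)) (at t0)"
proof -
  let ?L = "lambda_max J kB"
  let ?z = "(t0, ?L t0)"
  have d: "\<And>i j. (ent J kB i j has_real_derivative ent' J kB i j (fst ?z)) (at (fst ?z))"
    using ent_deriv[OF kB t0] by simp
  have dPF: "(PF (ent J kB) has_derivative (\<lambda>(h, k). h * Ftl J kB t0 + k * Fxl J kB t0)) (at ?z)"
    by (rule PF_deriv[where e="ent J kB" and e'="ent' J kB" and z="(t0, lambda_max J kB t0)", OF d])
  have "((\<lambda>x. PF (ent J kB) (t0, x)) has_derivative (\<lambda>k. (\<lambda>(h, k). h * Ftl J kB t0 + k * Fxl J kB t0) (0, k))) (at (?L t0))"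
    by (rule has_derivative_compose[OF has_derivative_Pair[OF has_derivative_const has_derivative_ident] dPF[simplified]])
  moreover have "(\<lambda>k. k * Fxl J kB t0) = (*) (Fxl J kB t0)" by (rule ext) (simp only: mult.commute)
  ultimately have "((\<lambda>x. poly (char_poly (tau J kB t0)) x) has_real_derivative Fxl J kB t0) (at (?L t0))"
    unfolding PF_poly has_field_derivative_def by simp
  moreover have "((\<lambda>x. poly (char_poly (tau J kB t0)) x) has_real_derivative poly (pderiv (char_poly (tau J kB t0))) (?L t0)) (at (?L t0))"
    by (rule poly_DERIV)
  ultimately have "Fxl J kB t0 = poly (pderiv (char_poly (tau J kB t0))) (?L t0)" by (rule DERIV_unique)
  moreover have "poly (pderiv (char_poly (tau J kB t0))) (?L t0) > 0"
  proof -
    obtain u where P: "perron_vec (tau J kB t0) 4 u (?L t0)" using perron_tau by blast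
    show ?thesis by (rule pderiv_pos[OF tau_carrier tau_pos'[where J=J and kB=kB and t=t0] P zero_less_numeral])
  qed
  ultimately show Fx: "Fxl J kB t0 > 0" by simp
  show "(?L has_real_derivative (- Ftl J kB t0 / Fxl J kB t0)) (at t0)"
  proof (rule ift1[where G="PF (ent J kB)" and L="lambda_max J kB", OF dPF])
    show "Fxl J kB t0 \<noteq> 0" using Fx by simp
    show "isCont ?L t0" by (rule lambda_cont[OF kB t0])
    show "\<forall>\<^sub>F t in nhds t0. PF (ent J kB) (t, ?L t) = 0"
      by (rule always_eventually) (simp add: PF_poly lambda_root)
  qed
qed

lemma L1_differentiable:
  assumes kB: "kB \<noteq> 0" and T: "T \<noteq> 0"
  shows "(\<lambda>t. - Ftl J kB t / Fxl J kB t) differentiable (at T)"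
proof -
  let ?L = "lambda_max J kB"
  have dL: "(?L has_real_derivative (- Ftl J kB T / Fxl J kB T)) (at T)" by (rule lambda_deriv(2)[OF kB T])
  have dP: "(\<lambda>t. (t, ?L t)) differentiable (at T)"
    using dL unfolding has_field_derivative_def
    by (intro differentiableI[OF has_derivative_Pair[OF has_derivative_ident]])
  have d: "\<And>i j. (ent J kB i j has_real_derivative ent' J kB i j (fst (T, ?L T))) (at (fst (T, ?L T)))"
    using ent_deriv[OF kB T] by simp
  have d': "\<And>i j. ent' J kB i j differentiable (at (fst (T, ?L T)))" using ent'_diff[OF kB T] by simp
  have "(\<lambda>t. Ftl J kB t) differentiable (at T)"
    by (rule differentiable_compose[where f="Ftf (ent J kB) (ent' J kB)", OF Ftf_Fxf_differentiable(1)[OF d d'] dP])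
  moreover have "(\<lambda>t. Fxl J kB t) differentiable (at T)"
    by (rule differentiable_compose[where f="Fxf (ent J kB)", OF Ftf_Fxf_differentiable(2)[OF d d'] dP])
  moreover have "Fxl J kB T \<noteq> 0" using lambda_deriv(1)[OF kB T, where J=J] by simp
  ultimately show ?thesis by (intro differentiable_divide differentiable_minus)
qed

theorem theorem1:
  fixes J :: "pos set \<Rightarrow> real" and kB T :: real
  assumes "kB > 0" and "T > 0"
  shows "(\<lambda>M. ln (partition_fn J kB M T) / (4 * real M)) \<longlonglongrightarrow> ln (lambda_max J kB T) / 4
    \<and> free_energy J kB T = - kB * T / 4 * ln (lambda_max J kB T)
    \<and> internal_energy J kB T = kB * T\<^sup>2 * deriv (\<lambda>t. ln (lambda_max J kB t) / 4) T
    \<and> heat_capacity J kB T =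
        2 * kB * T * deriv (\<lambda>t. ln (lambda_max J kB t) / 4) T
        + kB * T\<^sup>2 * deriv (deriv (\<lambda>t. ln (lambda_max J kB t) / 4)) T"
proof -
  have kB: "kB \<noteq> 0" using assms by simp
  let ?L = "lambda_max J kB"
  define g where "g t = ln (?L t) / 4" for t
  define L1 where "L1 t = - Ftl J kB t / Fxl J kB t" for t
  define g1 where "g1 t = (1 / ?L t * L1 t) / 4" for t
  have fe: "free_energy J kB t = - kB * t * (ln (?L t) / 4)" for t
    unfolding free_energy_def using limI[OF limit_part] by simp
  have dL: "(?L has_real_derivative L1 t) (at t)" if "t \<noteq> 0" for t
    unfolding L1_def by (rule lambda_deriv(2)[OF kB that])
  have dg: "(g has_real_derivative g1 t) (at t)" if "t \<noteq> 0" for t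
  proof -
    have "((\<lambda>t. ln (?L t)) has_real_derivative 1 / ?L t * L1 t) (at t)"
      by (rule DERIV_chain2[OF DERIV_ln_divide[OF lambda_pos] dL[OF that]])
    then show ?thesis unfolding g_def[abs_def] g1_def by (rule DERIV_cdivide)
  qed
  have deriv_g: "deriv g t = g1 t" if "t \<noteq> 0" for t using DERIV_imp_deriv[OF dg[OF that]] .
  have "g1 differentiable (at T)"
  proof -
    have "?L differentiable (at T)" using dL[of T] assms real_differentiable_def by auto
    moreover have "L1 differentiable (at T)"
      using L1_differentiable[OF kB, of T J] assms unfolding L1_def[abs_def] by simp
    ultimately show ?thesis unfolding g1_def[abs_def] using lambda_pos[of J kB T]
      by (intro differentiable_divide differentiable_mult differentiable_const) auto
  qed
  then obtain g2 where dg1: "(g1 has_real_derivative g2) (at T)" using real_differentiable_def by blast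
  have evpos: "eventually (\<lambda>t. t > 0) (nhds T)"
    using eventually_nhds_in_open[of "{0<..}" T] assms by simp
  have ie: "internal_energy J kB t = kB * t\<^sup>2 * g1 t" if t: "t > 0" for t
  proof -
    have ev: "eventually (\<lambda>s. s > 0) (nhds t)" using eventually_nhds_in_open[of "{0<..}" t] t by simp
    have "deriv (\<lambda>s. free_energy J kB s / s) t = deriv (\<lambda>s. - kB * g s) t"
      by (rule deriv_cong_ev[OF eventually_mono[OF ev] refl]) (simp add: fe g_def)
    also have "\<dots> = - kB * g1 t" by (rule DERIV_imp_deriv[OF DERIV_cmult[OF dg]]) (use t in simp)
    finally show ?thesis unfolding internal_energy_def by simp
  qed
  have part1: "(\<lambda>M. ln (partition_fn J kB M T) / (4 * real M)) \<longlonglongrightarrow> ln (lambda_max J kB T) / 4"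
    by (rule limit_part)
  have part2: "free_energy J kB T = - kB * T / 4 * ln (lambda_max J kB T)" by (simp add: fe)
  have part3: "internal_energy J kB T = kB * T\<^sup>2 * deriv (\<lambda>t. ln (lambda_max J kB t) / 4) T"
    using ie[OF assms(2)] deriv_g[of T] assms unfolding g_def[abs_def] by simp
  have "heat_capacity J kB T = deriv (\<lambda>t. kB * t\<^sup>2 * g1 t) T"
    unfolding heat_capacity_def by (rule deriv_cong_ev[OF eventually_mono[OF evpos] refl]) (simp add: ie)
  also have "\<dots> = kB * (2 * T) * g1 T + kB * T\<^sup>2 * g2"
    by (rule DERIV_imp_deriv) (auto intro!: derivative_eq_intros dg1)
  finally have hc: "heat_capacity J kB T = kB * (2 * T) * g1 T + kB * T\<^sup>2 * g2" .
  have "deriv (deriv g) T = deriv g1 T"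
    by (rule deriv_cong_ev[OF eventually_mono[OF evpos] refl]) (simp add: deriv_g)
  also have "\<dots> = g2" by (rule DERIV_imp_deriv[OF dg1])
  finally have dd: "deriv (deriv g) T = g2" .
  have part4: "heat_capacity J kB T =
        2 * kB * T * deriv (\<lambda>t. ln (lambda_max J kB t) / 4) T
        + kB * T\<^sup>2 * deriv (deriv (\<lambda>t. ln (lambda_max J kB t) / 4)) T"
    using hc dd deriv_g[of T] assms unfolding g_def[abs_def] by simp
  show ?thesis using part1 part2 part3 part4 by blast
qed
end
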